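(* Let $\mathcal A$ be an abelian category and $\mathcal T$ a full subcategory consisting of projective objects, closed under finite direct sums and direct summands. The following are equivalent: (1) $\underline{\mathcal A}=\mathcal A/\langle\mathcal T\rangle$ is balanced; (2) if $\mu:K\to X$ is a non-split monomorphism which factors through an object of $\mathcal T$, then there is a morphism $h:X\to T'$ with $T'\in\mathcal T$ such that no morphism $\tilde h:X\to(h\mu)(K)$ coincides with $h$ on $K$; (3) if $\mu:T\to X$ is a non-split monomorphism with $T\in\mathcal T$, then there is a morphism $h:X\to T'$ with $T'\in\mathcal T$ such that no morphism $\tilde h:X\to(h\mu)(T)$ coincides with $h$ on $T$; (4) every epimorphism $f:X\to Y$ satisfying (i) $f^k:\ker(f)\to X$ factors through an object of $\mathcal T$, and (ii) for every $h:X\to T$ with $T\in\mathcal T$ the canonical epimorphism $\ker(f)\twoheadrightarrow h(\ker f)$ factors through $f^k$, is a retraction; (5) for every non-split epimorphism $f:X\to Y$ with $\ker(f)\in\mathcal T$ there is a morphism $h:X\to T'$ with $T'\in\mathcal T$ such that for every morphism $g:Y\to T'$ the subobject $\ker(f)+\ker(h-gf)$ of $X$ is strictly contained in $X$.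
   Context: $\underline{\mathcal A}=\mathcal A/\langle\mathcal T\rangle$ is the stable category (same objects, morphisms modulo those factoring through an object of $\mathcal T$). A category is balanced if every morphism that is both a monomorphism and an epimorphism is an isomorphism. For a subobject $\kappa:K\hookrightarrow X$ and a morphism $h:X\to T$, $h(K)$ denotes the image of $h\kappa$ with canonical inclusion $j:h(K)\hookrightarrow T$, and $(h\mu)(K)$ the image of $h\mu$; a morphism $\tilde h:X\to h(K)$ coincides with $h$ on $K$ if $j\tilde h\kappa=h\kappa$. $f^k$ denotes the kernel morphism of $f$. *)

theory Defs
  imports Main
begin

record ('o, 'm) cat =
  Obj :: "'o set"
  Arr :: "'m set"
  Dom :: "'m \<Rightarrow> 'o"
  Cod :: "'m \<Rightarrow> 'o"
  Cmp :: "'m \<Rightarrow> 'm \<Rightarrow> 'm"   (* Cmp C g f = g \<circ> f *)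
  Idn :: "'o \<Rightarrow> 'm"
  Add :: "'m \<Rightarrow> 'm \<Rightarrow> 'm"
  Neg :: "'m \<Rightarrow> 'm"
  Zer :: "'o \<Rightarrow> 'o \<Rightarrow> 'm"

definition hom :: "('o,'m) cat \<Rightarrow> 'o \<Rightarrow> 'o \<Rightarrow> 'm set" where
  "hom C X Y = {f \<in> Arr C. Dom C f = X \<and> Cod C f = Y}"

definition category :: "('o,'m) cat \<Rightarrow> bool" where
  "category C \<longleftrightarrow>
     (\<forall>f\<in>Arr C. Dom C f \<in> Obj C \<and> Cod C f \<in> Obj C)
   \<and> (\<forall>X\<in>Obj C. Idn C X \<in> hom C X X)
   \<and> (\<forall>X Y Z f g. f \<in> hom C X Y \<longrightarrow> g \<in> hom C Y Z \<longrightarrow> Cmp C g f \<in> hom C X Z)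
   \<and> (\<forall>W X Y Z f g h. f \<in> hom C W X \<longrightarrow> g \<in> hom C X Y \<longrightarrow> h \<in> hom C Y Z \<longrightarrow>
        Cmp C h (Cmp C g f) = Cmp C (Cmp C h g) f)
   \<and> (\<forall>X Y f. f \<in> hom C X Y \<longrightarrow> Cmp C (Idn C Y) f = f \<and> Cmp C f (Idn C X) = f)"

definition preadditive :: "('o,'m) cat \<Rightarrow> bool" where
  "preadditive C \<longleftrightarrow> category C \<and>
    (\<forall>X\<in>Obj C. \<forall>Y\<in>Obj C.
       Zer C X Y \<in> hom C X Y
     \<and> (\<forall>f\<in>hom C X Y. \<forall>g\<in>hom C X Y. Add C f g \<in> hom C X Y)
     \<and> (\<forall>f\<in>hom C X Y. Neg C f \<in> hom C X Y)
     \<and> (\<forall>f\<in>hom C X Y. \<forall>g\<in>hom C X Y. \<forall>h\<in>hom C X Y.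
           Add C (Add C f g) h = Add C f (Add C g h))
     \<and> (\<forall>f\<in>hom C X Y. \<forall>g\<in>hom C X Y. Add C f g = Add C g f)
     \<and> (\<forall>f\<in>hom C X Y. Add C f (Zer C X Y) = f)
     \<and> (\<forall>f\<in>hom C X Y. Add C f (Neg C f) = Zer C X Y)
     \<and> (\<forall>Z\<in>Obj C. \<forall>f\<in>hom C X Y. \<forall>f'\<in>hom C X Y. \<forall>g\<in>hom C Y Z.
           Cmp C g (Add C f f') = Add C (Cmp C g f) (Cmp C g f'))
     \<and> (\<forall>Z\<in>Obj C. \<forall>f\<in>hom C X Y. \<forall>g\<in>hom C Y Z. \<forall>g'\<in>hom C Y Z.
           Cmp C (Add C g g') f = Add C (Cmp C g f) (Cmp C g' f)))"

definition zero_obj :: "('o,'m) cat \<Rightarrow> 'o \<Rightarrow> bool" where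
  "zero_obj C Z \<longleftrightarrow> Z \<in> Obj C \<and>
     (\<forall>X\<in>Obj C. (\<exists>!f. f \<in> hom C Z X) \<and> (\<exists>!f. f \<in> hom C X Z))"

definition is_biproduct ::
  "('o,'m) cat \<Rightarrow> 'o \<Rightarrow> 'o \<Rightarrow> 'o \<Rightarrow> 'm \<Rightarrow> 'm \<Rightarrow> 'm \<Rightarrow> 'm \<Rightarrow> bool" where
  "is_biproduct C X Y P i1 i2 p1 p2 \<longleftrightarrow>
     P \<in> Obj C \<and> i1 \<in> hom C X P \<and> i2 \<in> hom C Y P \<and> p1 \<in> hom C P X \<and> p2 \<in> hom C P Y
   \<and> Cmp C p1 i1 = Idn C X \<and> Cmp C p2 i2 = Idn C Y
   \<and> Cmp C p2 i1 = Zer C X Y \<and> Cmp C p1 i2 = Zer C Y X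
   \<and> Add C (Cmp C i1 p1) (Cmp C i2 p2) = Idn C P"

definition mono :: "('o,'m) cat \<Rightarrow> 'm \<Rightarrow> bool" where
  "mono C f \<longleftrightarrow> f \<in> Arr C \<and>
     (\<forall>g h. g \<in> Arr C \<longrightarrow> h \<in> Arr C \<longrightarrow> Dom C g = Dom C h \<longrightarrow>
        Cod C g = Dom C f \<longrightarrow> Cod C h = Dom C f \<longrightarrow> Cmp C f g = Cmp C f h \<longrightarrow> g = h)"

definition epi :: "('o,'m) cat \<Rightarrow> 'm \<Rightarrow> bool" where
  "epi C f \<longleftrightarrow> f \<in> Arr C \<and>
     (\<forall>g h. g \<in> Arr C \<longrightarrow> h \<in> Arr C \<longrightarrow> Cod C g = Cod C h \<longrightarrow>
        Dom C g = Cod C f \<longrightarrow> Dom C h = Cod C f \<longrightarrow> Cmp C g f = Cmp C h f \<longrightarrow> g = h)"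

definition iso :: "('o,'m) cat \<Rightarrow> 'm \<Rightarrow> bool" where
  "iso C f \<longleftrightarrow> f \<in> Arr C \<and>
     (\<exists>g\<in>hom C (Cod C f) (Dom C f).
        Cmp C g f = Idn C (Dom C f) \<and> Cmp C f g = Idn C (Cod C f))"

definition is_kernel :: "('o,'m) cat \<Rightarrow> 'm \<Rightarrow> 'm \<Rightarrow> bool" where
  "is_kernel C f k \<longleftrightarrow> f \<in> Arr C \<and> k \<in> Arr C \<and> Cod C k = Dom C f
   \<and> Cmp C f k = Zer C (Dom C k) (Cod C f)
   \<and> (\<forall>g\<in>Arr C. Cod C g = Dom C f \<longrightarrow> Cmp C f g = Zer C (Dom C g) (Cod C f) \<longrightarrow>
        (\<exists>!u. u \<in> hom C (Dom C g) (Dom C k) \<and> Cmp C k u = g))"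

definition is_cokernel :: "('o,'m) cat \<Rightarrow> 'm \<Rightarrow> 'm \<Rightarrow> bool" where
  "is_cokernel C f c \<longleftrightarrow> f \<in> Arr C \<and> c \<in> Arr C \<and> Dom C c = Cod C f
   \<and> Cmp C c f = Zer C (Dom C f) (Cod C c)
   \<and> (\<forall>g\<in>Arr C. Dom C g = Cod C f \<longrightarrow> Cmp C g f = Zer C (Dom C f) (Cod C g) \<longrightarrow>
        (\<exists>!u. u \<in> hom C (Cod C c) (Cod C g) \<and> Cmp C u c = g))"

definition abelian :: "('o,'m) cat \<Rightarrow> bool" where
  "abelian C \<longleftrightarrow> preadditive C
   \<and> (\<exists>Z. zero_obj C Z)
   \<and> (\<forall>X\<in>Obj C. \<forall>Y\<in>Obj C. \<exists>P i1 i2 p1 p2. is_biproduct C X Y P i1 i2 p1 p2)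
   \<and> (\<forall>f\<in>Arr C. (\<exists>k. is_kernel C f k) \<and> (\<exists>c. is_cokernel C f c))
   \<and> (\<forall>f. mono C f \<longrightarrow> (\<exists>g. is_kernel C g f))
   \<and> (\<forall>f. epi C f \<longrightarrow> (\<exists>g. is_cokernel C g f))"

definition projective :: "('o,'m) cat \<Rightarrow> 'o \<Rightarrow> bool" where
  "projective C P \<longleftrightarrow> P \<in> Obj C \<and>
     (\<forall>e g. epi C e \<longrightarrow> g \<in> hom C P (Cod C e) \<longrightarrow>
        (\<exists>u\<in>hom C P (Dom C e). Cmp C e u = g))"

text \<open>A full subcategory (given by its class of objects T) consisting of projectives,
  closed under finite direct sums (including the empty sum) and direct summands.\<close>
definition proj_subcat :: "('o,'m) cat \<Rightarrow> 'o set \<Rightarrow> bool" where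
  "proj_subcat C T \<longleftrightarrow> T \<subseteq> Obj C
   \<and> (\<forall>P\<in>T. projective C P)
   \<and> (\<forall>Z. zero_obj C Z \<longrightarrow> Z \<in> T)
   \<and> (\<forall>X Y P i1 i2 p1 p2. X \<in> T \<longrightarrow> Y \<in> T \<longrightarrow> is_biproduct C X Y P i1 i2 p1 p2 \<longrightarrow> P \<in> T)
   \<and> (\<forall>X Y P i1 i2 p1 p2. P \<in> T \<longrightarrow> is_biproduct C X Y P i1 i2 p1 p2 \<longrightarrow> X \<in> T)"

definition factors_T :: "('o,'m) cat \<Rightarrow> 'o set \<Rightarrow> 'm \<Rightarrow> bool" where
  "factors_T C T f \<longleftrightarrow> (\<exists>T'\<in>T. \<exists>a b. a \<in> hom C (Dom C f) T' \<and> b \<in> hom C T' (Cod C f)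
                        \<and> f = Cmp C b a)"

definition stable_eq :: "('o,'m) cat \<Rightarrow> 'o set \<Rightarrow> 'm \<Rightarrow> 'm \<Rightarrow> bool" where
  "stable_eq C T f g \<longleftrightarrow> factors_T C T (Add C f (Neg C g))"

definition stable_mono :: "('o,'m) cat \<Rightarrow> 'o set \<Rightarrow> 'm \<Rightarrow> bool" where
  "stable_mono C T f \<longleftrightarrow> f \<in> Arr C \<and>
     (\<forall>W g h. g \<in> hom C W (Dom C f) \<longrightarrow> h \<in> hom C W (Dom C f) \<longrightarrow>
        stable_eq C T (Cmp C f g) (Cmp C f h) \<longrightarrow> stable_eq C T g h)"

definition stable_epi :: "('o,'m) cat \<Rightarrow> 'o set \<Rightarrow> 'm \<Rightarrow> bool" where
  "stable_epi C T f \<longleftrightarrow> f \<in> Arr C \<and>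
     (\<forall>W g h. g \<in> hom C (Cod C f) W \<longrightarrow> h \<in> hom C (Cod C f) W \<longrightarrow>
        stable_eq C T (Cmp C g f) (Cmp C h f) \<longrightarrow> stable_eq C T g h)"

definition stable_iso :: "('o,'m) cat \<Rightarrow> 'o set \<Rightarrow> 'm \<Rightarrow> bool" where
  "stable_iso C T f \<longleftrightarrow> f \<in> Arr C \<and>
     (\<exists>g\<in>hom C (Cod C f) (Dom C f).
        stable_eq C T (Cmp C g f) (Idn C (Dom C f)) \<and> stable_eq C T (Cmp C f g) (Idn C (Cod C f)))"

definition stable_balanced :: "('o,'m) cat \<Rightarrow> 'o set \<Rightarrow> bool" where
  "stable_balanced C T \<longleftrightarrow>
     (\<forall>f\<in>Arr C. stable_mono C T f \<longrightarrow> stable_epi C T f \<longrightarrow> stable_iso C T f)"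

text \<open>f = j \<circ> e is an (epi, mono) image factorisation; Dom j is the image of f\<close>
definition is_image_fact :: "('o,'m) cat \<Rightarrow> 'm \<Rightarrow> 'm \<Rightarrow> 'm \<Rightarrow> bool" where
  "is_image_fact C f e j \<longleftrightarrow> f \<in> Arr C \<and> epi C e \<and> mono C j
     \<and> Dom C e = Dom C f \<and> Cod C j = Cod C f \<and> Cod C e = Dom C j \<and> Cmp C j e = f"

definition split_mono :: "('o,'m) cat \<Rightarrow> 'm \<Rightarrow> bool" where
  "split_mono C m \<longleftrightarrow> (\<exists>r\<in>hom C (Cod C m) (Dom C m). Cmp C r m = Idn C (Dom C m))"

definition retraction :: "('o,'m) cat \<Rightarrow> 'm \<Rightarrow> bool" where
  "retraction C f \<longleftrightarrow> (\<exists>s\<in>hom C (Cod C f) (Dom C f). Cmp C f s = Idn C (Cod C f))"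

text \<open>For mu : K \<rightarrow> X and h : X \<rightarrow> T': no morphism X \<rightarrow> (h mu)(K) coincides with h on K.\<close>
definition no_coinciding :: "('o,'m) cat \<Rightarrow> 'm \<Rightarrow> 'm \<Rightarrow> bool" where
  "no_coinciding C mu h \<longleftrightarrow>
     (\<forall>e j. is_image_fact C (Cmp C h mu) e j \<longrightarrow>
        \<not> (\<exists>ht\<in>hom C (Cod C mu) (Dom C j). Cmp C j (Cmp C ht mu) = Cmp C h mu))"

text \<open>The sum k1 + k2 of two subobjects of X (image of the induced map from the
  direct sum) is strictly contained in X.\<close>
definition proper_sum :: "('o,'m) cat \<Rightarrow> 'm \<Rightarrow> 'm \<Rightarrow> bool" where
  "proper_sum C k1 k2 \<longleftrightarrow>
     (\<forall>P i1 i2 p1 p2 e j. is_biproduct C (Dom C k1) (Dom C k2) P i1 i2 p1 p2 \<longrightarrow>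
        is_image_fact C (Add C (Cmp C k1 p1) (Cmp C k2 p2)) e j \<longrightarrow> \<not> iso C j)"

definition cond2 :: "('o,'m) cat \<Rightarrow> 'o set \<Rightarrow> bool" where
  "cond2 C T \<longleftrightarrow> (\<forall>mu. mono C mu \<longrightarrow> \<not> split_mono C mu \<longrightarrow> factors_T C T mu \<longrightarrow>
     (\<exists>T'\<in>T. \<exists>h\<in>hom C (Cod C mu) T'. no_coinciding C mu h))"

definition cond3 :: "('o,'m) cat \<Rightarrow> 'o set \<Rightarrow> bool" where
  "cond3 C T \<longleftrightarrow> (\<forall>mu. mono C mu \<longrightarrow> \<not> split_mono C mu \<longrightarrow> Dom C mu \<in> T \<longrightarrow>
     (\<exists>T'\<in>T. \<exists>h\<in>hom C (Cod C mu) T'. no_coinciding C mu h))"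

definition cond4 :: "('o,'m) cat \<Rightarrow> 'o set \<Rightarrow> bool" where
  "cond4 C T \<longleftrightarrow> (\<forall>f k. epi C f \<longrightarrow> is_kernel C f k \<longrightarrow>
     factors_T C T k \<longrightarrow>
     (\<forall>T0\<in>T. \<forall>h\<in>hom C (Dom C f) T0. \<forall>e j. is_image_fact C (Cmp C h k) e j \<longrightarrow>
         (\<exists>u\<in>hom C (Dom C f) (Cod C e). Cmp C u k = e)) \<longrightarrow>
     retraction C f)"

definition cond5 :: "('o,'m) cat \<Rightarrow> 'o set \<Rightarrow> bool" where
  "cond5 C T \<longleftrightarrow> (\<forall>f k. epi C f \<longrightarrow> \<not> retraction C f \<longrightarrow> is_kernel C f k \<longrightarrow> Dom C k \<in> T \<longrightarrow>
     (\<exists>T'\<in>T. \<exists>h\<in>hom C (Dom C f) T'. \<forall>g\<in>hom C (Cod C f) T'.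
        \<forall>k'. is_kernel C (Add C h (Neg C (Cmp C g f))) k' \<longrightarrow> proper_sum C k k'))"

end

theory Submission
  imports Defs
begin

locale AB =
  fixes C :: "('o,'m) cat" and T :: "'o set"
  assumes abel: "abelian C" and psub: "proj_subcat C T"
begin

abbreviation cp (infixr "\<cdot>" 75) where "g \<cdot> f \<equiv> Cmp C g f"
abbreviation ad (infixr "\<oplus>" 65) where "f \<oplus> g \<equiv> Add C f g"
abbreviation ng where "ng f \<equiv> Neg C f"

lemma cat: "category C" using abel unfolding abelian_def preadditive_def by blast
lemma pre: "preadditive C" using abel unfolding abelian_def by blast

lemma hom_iff: "f \<in> hom C X Y \<longleftrightarrow> f \<in> Arr C \<and> Dom C f = X \<and> Cod C f = Y"
  by (simp add: hom_def)

lemma arr_dom[simp]: "f \<in> Arr C \<Longrightarrow> Dom C f \<in> Obj C"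
  using cat unfolding category_def by blast
lemma arr_cod[simp]: "f \<in> Arr C \<Longrightarrow> Cod C f \<in> Obj C"
  using cat unfolding category_def by blast

lemma comp_h: "f \<in> Arr C \<Longrightarrow> g \<in> Arr C \<Longrightarrow> Cod C f = Dom C g \<Longrightarrow>
   g \<cdot> f \<in> hom C (Dom C f) (Cod C g)"
  using cat unfolding category_def hom_def by blast

lemma comp_arr[simp]: "f \<in> Arr C \<Longrightarrow> g \<in> Arr C \<Longrightarrow> Cod C f = Dom C g \<Longrightarrow> g \<cdot> f \<in> Arr C"
  using comp_h by (simp add: hom_def)
lemma dom_comp[simp]: "f \<in> Arr C \<Longrightarrow> g \<in> Arr C \<Longrightarrow> Cod C f = Dom C g \<Longrightarrow> Dom C (g \<cdot> f) = Dom C f"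
  using comp_h by (simp add: hom_def)
lemma cod_comp[simp]: "f \<in> Arr C \<Longrightarrow> g \<in> Arr C \<Longrightarrow> Cod C f = Dom C g \<Longrightarrow> Cod C (g \<cdot> f) = Cod C g"
  using comp_h by (simp add: hom_def)

lemma assoc[simp]: "f \<in> Arr C \<Longrightarrow> g \<in> Arr C \<Longrightarrow> h \<in> Arr C \<Longrightarrow> Cod C f = Dom C g \<Longrightarrow> Cod C g = Dom C h
  \<Longrightarrow> (h \<cdot> g) \<cdot> f = h \<cdot> (g \<cdot> f)"
proof -
  assume a: "f \<in> Arr C" "g \<in> Arr C" "h \<in> Arr C" "Cod C f = Dom C g" "Cod C g = Dom C h"
  have "f \<in> hom C (Dom C f) (Cod C f)" "g \<in> hom C (Cod C f) (Cod C g)" "h \<in> hom C (Cod C g) (Cod C h)"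
    using a by (auto simp: hom_def)
  then show ?thesis using cat unfolding category_def by metis
qed

lemma idn_arr[simp]: "X \<in> Obj C \<Longrightarrow> Idn C X \<in> Arr C"
  and idn_dom[simp]: "X \<in> Obj C \<Longrightarrow> Dom C (Idn C X) = X"
  and idn_cod[simp]: "X \<in> Obj C \<Longrightarrow> Cod C (Idn C X) = X"
  using cat unfolding category_def hom_def by blast+

lemma idl[simp]: "f \<in> Arr C \<Longrightarrow> Cod C f = Y \<Longrightarrow> Idn C Y \<cdot> f = f"
  using cat unfolding category_def hom_def by blast
lemma idr[simp]: "f \<in> Arr C \<Longrightarrow> Dom C f = X \<Longrightarrow> f \<cdot> Idn C X = f"
  using cat unfolding category_def hom_def by blast

lemma PA: "X \<in> Obj C \<Longrightarrow> Y \<in> Obj C \<Longrightarrow>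
       Zer C X Y \<in> hom C X Y
     \<and> (\<forall>f\<in>hom C X Y. \<forall>g\<in>hom C X Y. Add C f g \<in> hom C X Y)
     \<and> (\<forall>f\<in>hom C X Y. Neg C f \<in> hom C X Y)
     \<and> (\<forall>f\<in>hom C X Y. \<forall>g\<in>hom C X Y. \<forall>h\<in>hom C X Y.
           Add C (Add C f g) h = Add C f (Add C g h))
     \<and> (\<forall>f\<in>hom C X Y. \<forall>g\<in>hom C X Y. Add C f g = Add C g f)
     \<and> (\<forall>f\<in>hom C X Y. Add C f (Zer C X Y) = f)
     \<and> (\<forall>f\<in>hom C X Y. Add C f (Neg C f) = Zer C X Y)
     \<and> (\<forall>Z\<in>Obj C. \<forall>f\<in>hom C X Y. \<forall>f'\<in>hom C X Y. \<forall>g\<in>hom C Y Z.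
           Cmp C g (Add C f f') = Add C (Cmp C g f) (Cmp C g f'))
     \<and> (\<forall>Z\<in>Obj C. \<forall>f\<in>hom C X Y. \<forall>g\<in>hom C Y Z. \<forall>g'\<in>hom C Y Z.
           Cmp C (Add C g g') f = Add C (Cmp C g f) (Cmp C g' f))"
  using pre unfolding preadditive_def by blast

lemma zer_arr[simp]: "X \<in> Obj C \<Longrightarrow> Y \<in> Obj C \<Longrightarrow> Zer C X Y \<in> Arr C"
  and zer_dom[simp]: "X \<in> Obj C \<Longrightarrow> Y \<in> Obj C \<Longrightarrow> Dom C (Zer C X Y) = X"
  and zer_cod[simp]: "X \<in> Obj C \<Longrightarrow> Y \<in> Obj C \<Longrightarrow> Cod C (Zer C X Y) = Y"
  using PA unfolding hom_def by blast+

lemma add_h: "f \<in> Arr C \<Longrightarrow> g \<in> Arr C \<Longrightarrow> Dom C g = Dom C f \<Longrightarrow> Cod C g = Cod C f \<Longrightarrow>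
  f \<oplus> g \<in> hom C (Dom C f) (Cod C f)"
  using PA[of "Dom C f" "Cod C f"] by (simp add: hom_def)
lemma add_arr[simp]: "f \<in> Arr C \<Longrightarrow> g \<in> Arr C \<Longrightarrow> Dom C g = Dom C f \<Longrightarrow> Cod C g = Cod C f \<Longrightarrow> f \<oplus> g \<in> Arr C"
  and dom_add[simp]: "f \<in> Arr C \<Longrightarrow> g \<in> Arr C \<Longrightarrow> Dom C g = Dom C f \<Longrightarrow> Cod C g = Cod C f \<Longrightarrow> Dom C (f \<oplus> g) = Dom C f"
  and cod_add[simp]: "f \<in> Arr C \<Longrightarrow> g \<in> Arr C \<Longrightarrow> Dom C g = Dom C f \<Longrightarrow> Cod C g = Cod C f \<Longrightarrow> Cod C (f \<oplus> g) = Cod C f"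
  using add_h by (simp_all add: hom_def)

lemma neg_h: "f \<in> Arr C \<Longrightarrow> ng f \<in> hom C (Dom C f) (Cod C f)"
  using PA[of "Dom C f" "Cod C f"] by (simp add: hom_def)
lemma neg_arr[simp]: "f \<in> Arr C \<Longrightarrow> ng f \<in> Arr C"
  and dom_neg[simp]: "f \<in> Arr C \<Longrightarrow> Dom C (ng f) = Dom C f"
  and cod_neg[simp]: "f \<in> Arr C \<Longrightarrow> Cod C (ng f) = Cod C f"
  using neg_h by (simp_all add: hom_def)

lemma add_assoc[simp]: "f \<in> Arr C \<Longrightarrow> g \<in> Arr C \<Longrightarrow> h \<in> Arr C \<Longrightarrow> Dom C g = Dom C f \<Longrightarrow> Cod C g = Cod C f
  \<Longrightarrow> Dom C h = Dom C f \<Longrightarrow> Cod C h = Cod C f \<Longrightarrow> (f \<oplus> g) \<oplus> h = f \<oplus> (g \<oplus> h)"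
proof -
  assume a: "f \<in> Arr C" "g \<in> Arr C" "h \<in> Arr C" "Dom C g = Dom C f" "Cod C g = Cod C f"
     "Dom C h = Dom C f" "Cod C h = Cod C f"
  hence "f \<in> hom C (Dom C f) (Cod C f)" "g \<in> hom C (Dom C f) (Cod C f)" "h \<in> hom C (Dom C f) (Cod C f)"
    by (auto simp: hom_def)
  thus ?thesis using PA[OF arr_dom[OF a(1)] arr_cod[OF a(1)]] by auto
qed

lemma add_comm: "f \<in> Arr C \<Longrightarrow> g \<in> Arr C \<Longrightarrow> Dom C g = Dom C f \<Longrightarrow> Cod C g = Cod C f
   \<Longrightarrow> f \<oplus> g = g \<oplus> f"
proof -
  assume a: "f \<in> Arr C" "g \<in> Arr C" "Dom C g = Dom C f" "Cod C g = Cod C f"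
  hence "f \<in> hom C (Dom C f) (Cod C f)" "g \<in> hom C (Dom C f) (Cod C f)"
    by (auto simp: hom_def)
  thus ?thesis using PA[OF arr_dom[OF a(1)] arr_cod[OF a(1)]] by auto
qed

lemma add_zr[simp]: "f \<in> Arr C \<Longrightarrow> Dom C f = X \<Longrightarrow> Cod C f = Y \<Longrightarrow> f \<oplus> Zer C X Y = f"
  using PA[of "Dom C f" "Cod C f"] by (auto simp add: hom_def)
lemma add_zl[simp]: "f \<in> Arr C \<Longrightarrow> Dom C f = X \<Longrightarrow> Cod C f = Y \<Longrightarrow> Zer C X Y \<oplus> f = f"
  using add_zr add_comm by (metis arr_cod arr_dom zer_arr zer_cod zer_dom)
lemma add_negr[simp]: "f \<in> Arr C \<Longrightarrow> Dom C f = X \<Longrightarrow> Cod C f = Y \<Longrightarrow> f \<oplus> ng f = Zer C X Y"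
  using PA[of "Dom C f" "Cod C f"] by (auto simp add: hom_def)
lemma add_negl[simp]: "f \<in> Arr C \<Longrightarrow> Dom C f = X \<Longrightarrow> Cod C f = Y \<Longrightarrow> ng f \<oplus> f = Zer C X Y"
  using add_negr add_comm by (metis neg_arr dom_neg cod_neg)

lemma comp_addr[simp]: "f \<in> Arr C \<Longrightarrow> f' \<in> Arr C \<Longrightarrow> g \<in> Arr C \<Longrightarrow> Dom C f' = Dom C f \<Longrightarrow> Cod C f' = Cod C f
  \<Longrightarrow> Cod C f = Dom C g \<Longrightarrow> g \<cdot> (f \<oplus> f') = g \<cdot> f \<oplus> g \<cdot> f'"
proof -
  assume a: "f \<in> Arr C" "f' \<in> Arr C" "g \<in> Arr C" "Dom C f' = Dom C f" "Cod C f' = Cod C f" "Cod C f = Dom C g"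
  hence "f \<in> hom C (Dom C f) (Cod C f)" "f' \<in> hom C (Dom C f) (Cod C f)" "g \<in> hom C (Cod C f) (Cod C g)"
     "Cod C g \<in> Obj C"
    by (auto simp: hom_def)
  thus ?thesis using PA[OF arr_dom[OF a(1)] arr_cod[OF a(1)]] by blast
qed
lemma comp_addl[simp]: "f \<in> Arr C \<Longrightarrow> g' \<in> Arr C \<Longrightarrow> g \<in> Arr C \<Longrightarrow> Dom C g' = Dom C g \<Longrightarrow> Cod C g' = Cod C g
  \<Longrightarrow> Cod C f = Dom C g \<Longrightarrow> (g \<oplus> g') \<cdot> f = g \<cdot> f \<oplus> g' \<cdot> f"
proof -
  assume a: "f \<in> Arr C" "g' \<in> Arr C" "g \<in> Arr C" "Dom C g' = Dom C g" "Cod C g' = Cod C g" "Cod C f = Dom C g"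
  hence "f \<in> hom C (Dom C f) (Cod C f)" "g' \<in> hom C (Cod C f) (Cod C g)" "g \<in> hom C (Cod C f) (Cod C g)"
     "Cod C g \<in> Obj C"
    by (auto simp: hom_def)
  thus ?thesis using PA[OF arr_dom[OF a(1)] arr_cod[OF a(1)]] by blast
qed

lemma add_negl2[simp]: "a \<in> Arr C \<Longrightarrow> b \<in> Arr C \<Longrightarrow> Dom C b = Dom C a \<Longrightarrow> Cod C b = Cod C a
  \<Longrightarrow> ng a \<oplus> (a \<oplus> b) = b"
  using add_assoc[of "ng a" a b, symmetric] by simp
lemma add_negr2[simp]: "a \<in> Arr C \<Longrightarrow> b \<in> Arr C \<Longrightarrow> Dom C b = Dom C a \<Longrightarrow> Cod C b = Cod C a
  \<Longrightarrow> a \<oplus> (ng a \<oplus> b) = b"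
  using add_assoc[of a "ng a" b, symmetric] by simp

lemma add_cancel_l: "a \<in> Arr C \<Longrightarrow> b \<in> Arr C \<Longrightarrow> c \<in> Arr C \<Longrightarrow> Dom C b = Dom C a \<Longrightarrow> Cod C b = Cod C a
  \<Longrightarrow> Dom C c = Dom C a \<Longrightarrow> Cod C c = Cod C a \<Longrightarrow> a \<oplus> b = a \<oplus> c \<Longrightarrow> b = c"
  by (metis add_negl2)

lemma comp_zr[simp]: "g \<in> Arr C \<Longrightarrow> X \<in> Obj C \<Longrightarrow> Dom C g = Y \<Longrightarrow> Cod C g = Z \<Longrightarrow> g \<cdot> Zer C X Y = Zer C X Z"
proof -
  assume h: "g \<in> Arr C" "X \<in> Obj C" "Dom C g = Y" "Cod C g = Z"
  have o: "Y \<in> Obj C" "Z \<in> Obj C" using h by auto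
  have "g \<cdot> (Zer C X Y \<oplus> Zer C X Y) = g \<cdot> Zer C X Y \<oplus> g \<cdot> Zer C X Y" by (rule comp_addr) (use h o in auto)
  hence "g \<cdot> Zer C X Y \<oplus> g \<cdot> Zer C X Y = g \<cdot> Zer C X Y \<oplus> Zer C X Z" using h o by simp
  thus ?thesis using add_cancel_l[of "g \<cdot> Zer C X Y" "g \<cdot> Zer C X Y" "Zer C X Z"] h o by simp
qed
lemma comp_zl[simp]: "g \<in> Arr C \<Longrightarrow> Z \<in> Obj C \<Longrightarrow> Dom C g = X \<Longrightarrow> Cod C g = Y \<Longrightarrow> Zer C Y Z \<cdot> g = Zer C X Z"
proof -
  assume h: "g \<in> Arr C" "Z \<in> Obj C" "Dom C g = X" "Cod C g = Y"
  have o: "Y \<in> Obj C" "X \<in> Obj C" using h by auto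
  have "(Zer C Y Z \<oplus> Zer C Y Z) \<cdot> g = Zer C Y Z \<cdot> g \<oplus> Zer C Y Z \<cdot> g" by (rule comp_addl) (use h o in auto)
  hence "Zer C Y Z \<cdot> g \<oplus> Zer C Y Z \<cdot> g = Zer C Y Z \<cdot> g \<oplus> Zer C X Z" using h o by simp
  thus ?thesis using add_cancel_l[of "Zer C Y Z \<cdot> g" "Zer C Y Z \<cdot> g" "Zer C X Z"] h o by simp
qed

lemma neg_unique: "a \<in> Arr C \<Longrightarrow> b \<in> Arr C \<Longrightarrow> Dom C b = Dom C a \<Longrightarrow> Cod C b = Cod C a
   \<Longrightarrow> a \<oplus> b = Zer C (Dom C a) (Cod C a) \<Longrightarrow> b = ng a"
  using add_cancel_l[of a b "ng a"] by simp

lemma comp_negr[simp]: "f \<in> Arr C \<Longrightarrow> g \<in> Arr C \<Longrightarrow> Cod C f = Dom C g \<Longrightarrow> g \<cdot> ng f = ng (g \<cdot> f)"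
proof -
  assume h: "f \<in> Arr C" "g \<in> Arr C" "Cod C f = Dom C g"
  have "g \<cdot> (f \<oplus> ng f) = g \<cdot> f \<oplus> g \<cdot> ng f" by (rule comp_addr) (use h in auto)
  hence "g \<cdot> f \<oplus> g \<cdot> ng f = Zer C (Dom C f) (Cod C g)" using h by simp
  thus ?thesis using neg_unique[of "g \<cdot> f" "g \<cdot> ng f"] h by simp
qed
lemma comp_negl[simp]: "f \<in> Arr C \<Longrightarrow> g \<in> Arr C \<Longrightarrow> Cod C f = Dom C g \<Longrightarrow> ng g \<cdot> f = ng (g \<cdot> f)"
proof -
  assume h: "f \<in> Arr C" "g \<in> Arr C" "Cod C f = Dom C g"
  have "(g \<oplus> ng g) \<cdot> f = g \<cdot> f \<oplus> ng g \<cdot> f" by (rule comp_addl) (use h in auto)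
  hence "g \<cdot> f \<oplus> ng g \<cdot> f = Zer C (Dom C f) (Cod C g)" using h by simp
  thus ?thesis using neg_unique[of "g \<cdot> f" "ng g \<cdot> f"] h by simp
qed

lemma sub_zero_iff: "f \<in> Arr C \<Longrightarrow> g \<in> Arr C \<Longrightarrow> Dom C g = Dom C f \<Longrightarrow> Cod C g = Cod C f
   \<Longrightarrow> (f \<oplus> ng g = Zer C (Dom C f) (Cod C f)) = (f = g)"
proof
  assume h: "f \<in> Arr C" "g \<in> Arr C" "Dom C g = Dom C f" "Cod C g = Cod C f"
    and e: "f \<oplus> ng g = Zer C (Dom C f) (Cod C f)"
  have "ng g = ng f" using neg_unique[of f "ng g"] h e by simp
  have "f = f \<oplus> (ng g \<oplus> g)" using h by simp
  also have "\<dots> = (f \<oplus> ng g) \<oplus> g" using h by simp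
  also have "\<dots> = g" using h e by simp
  finally show "f = g" .
qed simp

lemma neg_neg[simp]: "f \<in> Arr C \<Longrightarrow> ng (ng f) = f"
  using neg_unique[of "ng f" f] by simp

lemma neg_add[simp]: "f \<in> Arr C \<Longrightarrow> g \<in> Arr C \<Longrightarrow> Dom C g = Dom C f \<Longrightarrow> Cod C g = Cod C f
  \<Longrightarrow> ng (f \<oplus> g) = ng f \<oplus> ng g"
proof -
  assume h: "f \<in> Arr C" "g \<in> Arr C" "Dom C g = Dom C f" "Cod C g = Cod C f"
  have c: "ng f \<oplus> ng g = ng g \<oplus> ng f" using add_comm[of "ng f" "ng g"] h by simp
  have "(f \<oplus> g) \<oplus> (ng g \<oplus> ng f) = Zer C (Dom C f) (Cod C f)" using h by simp
  hence "ng g \<oplus> ng f = ng (f \<oplus> g)" using neg_unique[of "f \<oplus> g" "ng g \<oplus> ng f"] h by simp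
  thus ?thesis using c by simp
qed

lemma neg_zer[simp]: "X \<in> Obj C \<Longrightarrow> Y \<in> Obj C \<Longrightarrow> ng (Zer C X Y) = Zer C X Y"
  using neg_unique[of "Zer C X Y" "Zer C X Y"] by simp

lemma hom_mem[intro]: "f \<in> Arr C \<Longrightarrow> Dom C f = X \<Longrightarrow> Cod C f = Y \<Longrightarrow> f \<in> hom C X Y"
  by (simp add: hom_def)

section \<open>mono / epi\<close>

lemma mono_arr: "mono C m \<Longrightarrow> m \<in> Arr C" by (simp add: mono_def)
lemma epi_arr: "epi C m \<Longrightarrow> m \<in> Arr C" by (simp add: epi_def)

lemma monoD: "mono C m \<Longrightarrow> a \<in> Arr C \<Longrightarrow> b \<in> Arr C \<Longrightarrow> Dom C b = Dom C a \<Longrightarrow> Cod C a = Dom C m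
  \<Longrightarrow> Cod C b = Dom C m \<Longrightarrow> m \<cdot> a = m \<cdot> b \<Longrightarrow> a = b"
  unfolding mono_def by metis
lemma epiD: "epi C e \<Longrightarrow> a \<in> Arr C \<Longrightarrow> b \<in> Arr C \<Longrightarrow> Cod C b = Cod C a \<Longrightarrow> Dom C a = Cod C e
  \<Longrightarrow> Dom C b = Cod C e \<Longrightarrow> a \<cdot> e = b \<cdot> e \<Longrightarrow> a = b"
  unfolding epi_def by metis

lemma monoI0: assumes m: "m \<in> Arr C"
  and H: "\<And>a. a \<in> Arr C \<Longrightarrow> Cod C a = Dom C m \<Longrightarrow> m \<cdot> a = Zer C (Dom C a) (Cod C m) \<Longrightarrow> a = Zer C (Dom C a) (Dom C m)"
  shows "mono C m"
  unfolding mono_def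
proof (intro conjI allI impI m)
  fix a b assume h: "a \<in> Arr C" "b \<in> Arr C" "Dom C a = Dom C b" "Cod C a = Dom C m" "Cod C b = Dom C m" "m \<cdot> a = m \<cdot> b"
  have "m \<cdot> (a \<oplus> ng b) = m \<cdot> a \<oplus> ng (m \<cdot> b)" using h m by simp
  also have "\<dots> = Zer C (Dom C a) (Cod C m)" using h m by simp
  finally have "a \<oplus> ng b = Zer C (Dom C a) (Dom C m)" using H[of "a \<oplus> ng b"] h m by simp
  thus "a = b" using sub_zero_iff[of a b] h by simp
qed

lemma epiI0: assumes m: "e \<in> Arr C"
  and H: "\<And>a. a \<in> Arr C \<Longrightarrow> Dom C a = Cod C e \<Longrightarrow> a \<cdot> e = Zer C (Dom C e) (Cod C a) \<Longrightarrow> a = Zer C (Cod C e) (Cod C a)"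
  shows "epi C e"
  unfolding epi_def
proof (intro conjI allI impI m)
  fix a b assume h: "a \<in> Arr C" "b \<in> Arr C" "Cod C a = Cod C b" "Dom C a = Cod C e" "Dom C b = Cod C e" "a \<cdot> e = b \<cdot> e"
  have "(a \<oplus> ng b) \<cdot> e = a \<cdot> e \<oplus> ng (b \<cdot> e)" using h m by simp
  also have "\<dots> = Zer C (Dom C e) (Cod C a)" using h m by simp
  finally have "a \<oplus> ng b = Zer C (Cod C e) (Cod C a)" using H[of "a \<oplus> ng b"] h m by simp
  thus "a = b" using sub_zero_iff[of a b] h by simp
qed

lemma mono_zero: "mono C m \<Longrightarrow> a \<in> Arr C \<Longrightarrow> Cod C a = Dom C m \<Longrightarrow> m \<cdot> a = Zer C (Dom C a) (Cod C m)
   \<Longrightarrow> a = Zer C (Dom C a) (Dom C m)"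
  using monoD[of m a "Zer C (Dom C a) (Dom C m)"] mono_arr[of m] by simp
lemma epi_zero: "epi C e \<Longrightarrow> a \<in> Arr C \<Longrightarrow> Dom C a = Cod C e \<Longrightarrow> a \<cdot> e = Zer C (Dom C e) (Cod C a)
   \<Longrightarrow> a = Zer C (Cod C e) (Cod C a)"
  using epiD[of e a "Zer C (Cod C e) (Cod C a)"] epi_arr[of e] by simp

lemma mono_comp: assumes "mono C m" "mono C n" "Cod C n = Dom C m" shows "mono C (m \<cdot> n)"
proof -
  have a: "m \<in> Arr C" "n \<in> Arr C" using assms mono_arr by auto
  show ?thesis
  proof (rule monoI0)
    fix a assume h: "a \<in> Arr C" "Cod C a = Dom C (m \<cdot> n)" "(m \<cdot> n) \<cdot> a = Zer C (Dom C a) (Cod C (m \<cdot> n))"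
    have "m \<cdot> (n \<cdot> a) = Zer C (Dom C a) (Cod C m)" using h a assms by simp
    hence "n \<cdot> a = Zer C (Dom C a) (Dom C m)" using mono_zero[of m "n \<cdot> a"] h a assms by simp
    hence "a = Zer C (Dom C a) (Dom C n)" using mono_zero[of n a] h a assms by simp
    thus "a = Zer C (Dom C a) (Dom C (m \<cdot> n))" using a assms by simp
  qed (use a assms in simp)
qed

lemma epi_comp: assumes "epi C e" "epi C f" "Cod C f = Dom C e" shows "epi C (e \<cdot> f)"
proof -
  have a: "e \<in> Arr C" "f \<in> Arr C" using assms epi_arr by auto
  show ?thesis
  proof (rule epiI0)
    fix x assume h: "x \<in> Arr C" "Dom C x = Cod C (e \<cdot> f)" "x \<cdot> e \<cdot> f = Zer C (Dom C (e \<cdot> f)) (Cod C x)"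
    have "(x \<cdot> e) \<cdot> f = Zer C (Dom C f) (Cod C x)" using h a assms by simp
    hence "x \<cdot> e = Zer C (Dom C e) (Cod C x)" using epi_zero[of f "x \<cdot> e"] h a assms by simp
    hence "x = Zer C (Cod C e) (Cod C x)" using epi_zero[of e x] h a assms by simp
    thus "x = Zer C (Cod C (e \<cdot> f)) (Cod C x)" using a assms by simp
  qed (use a assms in simp)
qed

lemma mono_cancel: assumes "mono C (m \<cdot> n)" "m \<in> Arr C" "n \<in> Arr C" "Cod C n = Dom C m" shows "mono C n"
proof (rule monoI0)
  fix a assume h: "a \<in> Arr C" "Cod C a = Dom C n" "n \<cdot> a = Zer C (Dom C a) (Cod C n)"
  have "(m \<cdot> n) \<cdot> a = Zer C (Dom C a) (Cod C (m \<cdot> n))" using h assms by simp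
  thus "a = Zer C (Dom C a) (Dom C n)" using mono_zero[of "m \<cdot> n" a] h assms by simp
qed (use assms in simp)

lemma epi_cancel: assumes "epi C (e \<cdot> f)" "e \<in> Arr C" "f \<in> Arr C" "Cod C f = Dom C e" shows "epi C e"
proof (rule epiI0)
  fix a assume h: "a \<in> Arr C" "Dom C a = Cod C e" "a \<cdot> e = Zer C (Dom C e) (Cod C a)"
  have "a \<cdot> (e \<cdot> f) = Zer C (Dom C (e \<cdot> f)) (Cod C a)" using h assms
    by (simp flip: assoc)
  thus "a = Zer C (Cod C e) (Cod C a)" using epi_zero[of "e \<cdot> f" a] h assms by simp
qed (use assms in simp)

lemma iso_mono: "iso C f \<Longrightarrow> mono C f"
  unfolding iso_def
proof (elim conjE bexE)
  fix g assume h: "f \<in> Arr C" "g \<in> hom C (Cod C f) (Dom C f)" "g \<cdot> f = Idn C (Dom C f)" "f \<cdot> g = Idn C (Cod C f)"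
  have "mono C ((g \<cdot> f))"
  proof (rule monoI0)
    fix a assume a: "a \<in> Arr C" "Cod C a = Dom C (g \<cdot> f)" "(g \<cdot> f) \<cdot> a = Zer C (Dom C a) (Cod C (g \<cdot> f))"
    thus "a = Zer C (Dom C a) (Dom C (g \<cdot> f))" using h by (simp add: hom_def)
  qed (use h in \<open>simp add: hom_def\<close>)
  thus "mono C f" using mono_cancel[of g f] h by (simp add: hom_def)
qed

lemma iso_epi: "iso C f \<Longrightarrow> epi C f"
  unfolding iso_def
proof (elim conjE bexE)
  fix g assume h: "f \<in> Arr C" "g \<in> hom C (Cod C f) (Dom C f)" "g \<cdot> f = Idn C (Dom C f)" "f \<cdot> g = Idn C (Cod C f)"
  have "epi C ((f \<cdot> g))"
  proof (rule epiI0)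
    fix a assume a: "a \<in> Arr C" "Dom C a = Cod C (f \<cdot> g)" "a \<cdot> (f \<cdot> g) = Zer C (Dom C (f \<cdot> g)) (Cod C a)"
    thus "a = Zer C (Cod C (f \<cdot> g)) (Cod C a)" using h by (simp add: hom_def)
  qed (use h in \<open>simp add: hom_def\<close>)
  thus "epi C f" using epi_cancel[of f g] h by (simp add: hom_def)
qed

lemma iso_idn: "X \<in> Obj C \<Longrightarrow> iso C (Idn C X)"
  unfolding iso_def by (auto intro!: bexI[of _ "Idn C X"])

lemma mono_idn: "X \<in> Obj C \<Longrightarrow> mono C (Idn C X)" using iso_mono iso_idn by blast

section \<open>kernels and cokernels\<close>

lemma ker_ex: "f \<in> Arr C \<Longrightarrow> \<exists>k. is_kernel C f k"
  using abel unfolding abelian_def by blast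
lemma coker_ex: "f \<in> Arr C \<Longrightarrow> \<exists>k. is_cokernel C f k"
  using abel unfolding abelian_def by blast

lemma kerD: "is_kernel C f k \<Longrightarrow> f \<in> Arr C \<and> k \<in> Arr C \<and> Cod C k = Dom C f \<and> f \<cdot> k = Zer C (Dom C k) (Cod C f)"
  unfolding is_kernel_def by blast
lemma cokerD: "is_cokernel C f c \<Longrightarrow> f \<in> Arr C \<and> c \<in> Arr C \<and> Dom C c = Cod C f \<and> c \<cdot> f = Zer C (Dom C f) (Cod C c)"
  unfolding is_cokernel_def by blast

lemma ker_fac: "is_kernel C f k \<Longrightarrow> g \<in> Arr C \<Longrightarrow> Cod C g = Dom C f \<Longrightarrow> f \<cdot> g = Zer C (Dom C g) (Cod C f)
  \<Longrightarrow> \<exists>u. u \<in> Arr C \<and> Dom C u = Dom C g \<and> Cod C u = Dom C k \<and> k \<cdot> u = g"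
  unfolding is_kernel_def hom_def by blast
lemma coker_fac: "is_cokernel C f c \<Longrightarrow> g \<in> Arr C \<Longrightarrow> Dom C g = Cod C f \<Longrightarrow> g \<cdot> f = Zer C (Dom C f) (Cod C g)
  \<Longrightarrow> \<exists>u. u \<in> Arr C \<and> Dom C u = Cod C c \<and> Cod C u = Cod C g \<and> u \<cdot> c = g"
  unfolding is_cokernel_def hom_def by blast

lemma ker_mono: assumes "is_kernel C f k" shows "mono C k"
proof (rule monoI0)
  show "k \<in> Arr C" using kerD[OF assms] by blast
next
  fix a assume a: "a \<in> Arr C" "Cod C a = Dom C k" "k \<cdot> a = Zer C (Dom C a) (Cod C k)"
  have kk: "f \<in> Arr C" "k \<in> Arr C" "Cod C k = Dom C f" "f \<cdot> k = Zer C (Dom C k) (Cod C f)" using kerD[OF assms] by auto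
  let ?g = "Zer C (Dom C a) (Cod C k)"
  have g: "?g \<in> Arr C" "Cod C ?g = Dom C f" "f \<cdot> ?g = Zer C (Dom C ?g) (Cod C f)" using a kk by auto
  from assms g have "\<exists>!u. u \<in> hom C (Dom C ?g) (Dom C k) \<and> k \<cdot> u = ?g" unfolding is_kernel_def by blast
  moreover have "a \<in> hom C (Dom C ?g) (Dom C k) \<and> k \<cdot> a = ?g" using a kk by (auto simp: hom_def)
  moreover have "Zer C (Dom C a) (Dom C k) \<in> hom C (Dom C ?g) (Dom C k) \<and> k \<cdot> Zer C (Dom C a) (Dom C k) = ?g"
    using a kk by (auto simp: hom_def)
  ultimately show "a = Zer C (Dom C a) (Dom C k)" by blast
qed

lemma coker_epi: assumes "is_cokernel C f c" shows "epi C c"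
proof (rule epiI0)
  show "c \<in> Arr C" using cokerD[OF assms] by blast
next
  fix a assume a: "a \<in> Arr C" "Dom C a = Cod C c" "a \<cdot> c = Zer C (Dom C c) (Cod C a)"
  have kk: "f \<in> Arr C" "c \<in> Arr C" "Dom C c = Cod C f" "c \<cdot> f = Zer C (Dom C f) (Cod C c)" using cokerD[OF assms] by auto
  let ?g = "Zer C (Dom C c) (Cod C a)"
  have g: "?g \<in> Arr C" "Dom C ?g = Cod C f" "?g \<cdot> f = Zer C (Dom C f) (Cod C ?g)" using a kk by auto
  from assms g have "\<exists>!u. u \<in> hom C (Cod C c) (Cod C ?g) \<and> u \<cdot> c = ?g" unfolding is_cokernel_def by blast
  moreover have "a \<in> hom C (Cod C c) (Cod C ?g) \<and> a \<cdot> c = ?g" using a kk by (auto simp: hom_def)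
  moreover have "Zer C (Cod C c) (Cod C a) \<in> hom C (Cod C c) (Cod C ?g) \<and> Zer C (Cod C c) (Cod C a) \<cdot> c = ?g"
    using a kk by (auto simp: hom_def)
  ultimately show "a = Zer C (Cod C c) (Cod C a)" by blast
qed

lemma is_kernelI: assumes "f \<in> Arr C" "k \<in> Arr C" "mono C k" "Cod C k = Dom C f" "f \<cdot> k = Zer C (Dom C k) (Cod C f)"
  and H: "\<And>g. g \<in> Arr C \<Longrightarrow> Cod C g = Dom C f \<Longrightarrow> f \<cdot> g = Zer C (Dom C g) (Cod C f) \<Longrightarrow>
        \<exists>u. u \<in> Arr C \<and> Dom C u = Dom C g \<and> Cod C u = Dom C k \<and> k \<cdot> u = g"
  shows "is_kernel C f k"
  unfolding is_kernel_def
proof (intro conjI assms ballI impI)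
  fix g assume g: "g \<in> Arr C" "Cod C g = Dom C f" "f \<cdot> g = Zer C (Dom C g) (Cod C f)"
  obtain u where u: "u \<in> Arr C" "Dom C u = Dom C g" "Cod C u = Dom C k" "k \<cdot> u = g" using H[OF g] by blast
  show "\<exists>!u. u \<in> hom C (Dom C g) (Dom C k) \<and> k \<cdot> u = g"
  proof (rule ex1I[of _ u])
    show "u \<in> hom C (Dom C g) (Dom C k) \<and> k \<cdot> u = g" using u by (auto simp: hom_def)
  next
    fix v assume v: "v \<in> hom C (Dom C g) (Dom C k) \<and> k \<cdot> v = g"
    show "v = u" using monoD[OF assms(3), of v u] u v by (auto simp: hom_def)
  qed
qed

lemma is_cokernelI: assumes "f \<in> Arr C" "c \<in> Arr C" "epi C c" "Dom C c = Cod C f" "c \<cdot> f = Zer C (Dom C f) (Cod C c)"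
  and H: "\<And>g. g \<in> Arr C \<Longrightarrow> Dom C g = Cod C f \<Longrightarrow> g \<cdot> f = Zer C (Dom C f) (Cod C g) \<Longrightarrow>
        \<exists>u. u \<in> Arr C \<and> Dom C u = Cod C c \<and> Cod C u = Cod C g \<and> u \<cdot> c = g"
  shows "is_cokernel C f c"
  unfolding is_cokernel_def
proof (intro conjI assms ballI impI)
  fix g assume g: "g \<in> Arr C" "Dom C g = Cod C f" "g \<cdot> f = Zer C (Dom C f) (Cod C g)"
  obtain u where u: "u \<in> Arr C" "Dom C u = Cod C c" "Cod C u = Cod C g" "u \<cdot> c = g" using H[OF g] by blast
  show "\<exists>!u. u \<in> hom C (Cod C c) (Cod C g) \<and> u \<cdot> c = g"
  proof (rule ex1I[of _ u])
    show "u \<in> hom C (Cod C c) (Cod C g) \<and> u \<cdot> c = g" using u by (auto simp: hom_def)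
  next
    fix v assume v: "v \<in> hom C (Cod C c) (Cod C g) \<and> v \<cdot> c = g"
    show "v = u" using epiD[OF assms(3), of v u] u v by (auto simp: hom_def)
  qed
qed

lemma mono_ker: assumes m: "mono C m" and c: "is_cokernel C m c" shows "is_kernel C c m"
proof -
  obtain h where h: "is_kernel C h m" using abel m unfolding abelian_def by blast
  have hh: "h \<in> Arr C" "m \<in> Arr C" "Cod C m = Dom C h" "h \<cdot> m = Zer C (Dom C m) (Cod C h)" using kerD[OF h] by auto
  have cc: "c \<in> Arr C" "Dom C c = Cod C m" "c \<cdot> m = Zer C (Dom C m) (Cod C c)" using cokerD[OF c] by auto
  obtain l where l: "l \<in> Arr C" "Dom C l = Cod C c" "Cod C l = Cod C h" "l \<cdot> c = h"
    using coker_fac[OF c, of h] hh by auto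
  show ?thesis
  proof (rule is_kernelI)
    fix g assume g: "g \<in> Arr C" "Cod C g = Dom C c" "c \<cdot> g = Zer C (Dom C g) (Cod C c)"
    have "(l \<cdot> c) \<cdot> g = l \<cdot> (c \<cdot> g)" by (rule assoc) (use l g cc in auto)
    hence "h \<cdot> g = Zer C (Dom C g) (Cod C h)" using g l cc by simp
    thus "\<exists>u. u \<in> Arr C \<and> Dom C u = Dom C g \<and> Cod C u = Dom C m \<and> m \<cdot> u = g"
      using ker_fac[OF h, of g] g hh cc by auto
  qed (use m cc hh in auto)
qed

lemma epi_coker: assumes m: "epi C e" and c: "is_kernel C e k" shows "is_cokernel C k e"
proof -
  obtain h where h: "is_cokernel C h e" using abel m unfolding abelian_def by blast
  have hh: "h \<in> Arr C" "e \<in> Arr C" "Dom C e = Cod C h" "e \<cdot> h = Zer C (Dom C h) (Cod C e)" using cokerD[OF h] by auto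
  have cc: "k \<in> Arr C" "Cod C k = Dom C e" "e \<cdot> k = Zer C (Dom C k) (Cod C e)" using kerD[OF c] by auto
  obtain l where l: "l \<in> Arr C" "Cod C l = Dom C k" "Dom C l = Dom C h" "k \<cdot> l = h"
    using ker_fac[OF c, of h] hh by auto
  show ?thesis
  proof (rule is_cokernelI)
    fix g assume g: "g \<in> Arr C" "Dom C g = Cod C k" "g \<cdot> k = Zer C (Dom C k) (Cod C g)"
    have "(g \<cdot> k) \<cdot> l = g \<cdot> (k \<cdot> l)" by (rule assoc) (use l g cc in auto)
    hence "g \<cdot> h = Zer C (Dom C h) (Cod C g)" using g l cc by simp
    thus "\<exists>u. u \<in> Arr C \<and> Dom C u = Cod C e \<and> Cod C u = Cod C g \<and> u \<cdot> e = g"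
      using coker_fac[OF h, of g] g hh cc by auto
  qed (use m cc hh in auto)
qed


lemma image_ex: assumes phi: "\<phi> \<in> Arr C" shows "\<exists>e j. is_image_fact C \<phi> e j"
proof -
  obtain c where c: "is_cokernel C \<phi> c" using coker_ex[OF phi] by blast
  have cc: "c \<in> Arr C" "Dom C c = Cod C \<phi>" "c \<cdot> \<phi> = Zer C (Dom C \<phi>) (Cod C c)" using cokerD[OF c] by auto
  obtain j where j: "is_kernel C c j" using ker_ex[OF cc(1)] by blast
  have jj: "j \<in> Arr C" "Cod C j = Dom C c" "c \<cdot> j = Zer C (Dom C j) (Cod C c)" using kerD[OF j] by auto
  have jm: "mono C j" using ker_mono[OF j] .
  obtain e where e: "e \<in> Arr C" "Dom C e = Dom C \<phi>" "Cod C e = Dom C j" "j \<cdot> e = \<phi>"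
    using ker_fac[OF j, of \<phi>] phi cc by auto
  have "epi C e"
  proof (rule epiI0[OF e(1)])
    fix x assume x: "x \<in> Arr C" "Dom C x = Cod C e" "x \<cdot> e = Zer C (Dom C e) (Cod C x)"
    obtain n where n: "is_kernel C x n" using ker_ex[OF x(1)] by blast
    have nn: "n \<in> Arr C" "Cod C n = Dom C x" "x \<cdot> n = Zer C (Dom C n) (Cod C x)" using kerD[OF n] by auto
    obtain e' where e': "e' \<in> Arr C" "Dom C e' = Dom C e" "Cod C e' = Dom C n" "n \<cdot> e' = e"
      using ker_fac[OF n, of e] x e by auto
    have jnm: "mono C (j \<cdot> n)" using mono_comp[OF jm ker_mono[OF n]] nn x e by simp
    obtain d where d: "is_cokernel C (j \<cdot> n) d" using coker_ex[of "j \<cdot> n"] nn jj x e by auto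
    have dd: "d \<in> Arr C" "Dom C d = Cod C j" "d \<cdot> (j \<cdot> n) = Zer C (Dom C n) (Cod C d)"
      using cokerD[OF d] nn jj x e by auto
    have dk: "is_kernel C d (j \<cdot> n)" using mono_ker[OF jnm d] .
    have "(d \<cdot> (j \<cdot> n)) \<cdot> e' = d \<cdot> ((j \<cdot> n) \<cdot> e')" by (rule assoc) (use dd nn jj x e e' in auto)
    also have "(j \<cdot> n) \<cdot> e' = j \<cdot> (n \<cdot> e')" by (rule assoc) (use dd nn jj x e e' in auto)
    finally have "d \<cdot> \<phi> = Zer C (Dom C \<phi>) (Cod C d)" using dd e' e nn jj x by simp
    then obtain l where l: "l \<in> Arr C" "Dom C l = Cod C c" "Cod C l = Cod C d" "l \<cdot> c = d"
      using coker_fac[OF c, of d] dd e jj cc by auto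
    have "(l \<cdot> c) \<cdot> j = l \<cdot> (c \<cdot> j)" by (rule assoc) (use l cc jj in auto)
    hence "d \<cdot> j = Zer C (Dom C j) (Cod C d)" using l cc jj by simp
    then obtain w where w: "w \<in> Arr C" "Dom C w = Dom C j" "Cod C w = Dom C (j \<cdot> n)" "(j \<cdot> n) \<cdot> w = j"
      using ker_fac[OF dk, of j] jj dd by auto
    have "j \<cdot> (n \<cdot> w) = j \<cdot> Idn C (Dom C j)" using w nn jj x e by simp
    hence nw: "n \<cdot> w = Idn C (Dom C j)" using monoD[OF jm, of "n \<cdot> w" "Idn C (Dom C j)"] w nn jj x e by simp
    have "x = x \<cdot> (n \<cdot> w)" using nw x e by simp
    also have "\<dots> = (x \<cdot> n) \<cdot> w" by (rule assoc[symmetric]) (use w nn jj x e in auto)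
    also have "\<dots> = Zer C (Cod C e) (Cod C x)" using w nn jj x e by simp
    finally show "x = Zer C (Cod C e) (Cod C x)" .
  qed
  hence "is_image_fact C \<phi> e j" unfolding is_image_fact_def using phi jm e jj cc by simp
  thus ?thesis by blast
qed

section \<open>biproducts, zero objects\<close>

lemma bip_ex: "X \<in> Obj C \<Longrightarrow> Y \<in> Obj C \<Longrightarrow> \<exists>P i1 i2 p1 p2. is_biproduct C X Y P i1 i2 p1 p2"
proof -
  assume "X \<in> Obj C" "Y \<in> Obj C"
  moreover have "\<forall>X\<in>Obj C. \<forall>Y\<in>Obj C. \<exists>P i1 i2 p1 p2. is_biproduct C X Y P i1 i2 p1 p2"
    using abel unfolding abelian_def by (elim conjE)
  ultimately show ?thesis by blast
qed

lemma bipD: "is_biproduct C X Y P i1 i2 p1 p2 \<Longrightarrow>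
   P \<in> Obj C \<and> i1 \<in> Arr C \<and> i2 \<in> Arr C \<and> p1 \<in> Arr C \<and> p2 \<in> Arr C \<and>
   Dom C i1 = X \<and> Cod C i1 = P \<and> Dom C i2 = Y \<and> Cod C i2 = P \<and>
   Dom C p1 = P \<and> Cod C p1 = X \<and> Dom C p2 = P \<and> Cod C p2 = Y \<and>
   p1 \<cdot> i1 = Idn C X \<and> p2 \<cdot> i2 = Idn C Y \<and> p2 \<cdot> i1 = Zer C X Y \<and> p1 \<cdot> i2 = Zer C Y X \<and>
   i1 \<cdot> p1 \<oplus> i2 \<cdot> p2 = Idn C P"
  unfolding is_biproduct_def hom_def by blast

lemma zero_in_T: "\<exists>Z. Z \<in> T \<and> Z \<in> Obj C"
proof -
  obtain Z where Z: "zero_obj C Z" using abel unfolding abelian_def by blast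
  have "Z \<in> T" using psub Z unfolding proj_subcat_def by blast
  moreover have "Z \<in> Obj C" using Z unfolding zero_obj_def by blast
  ultimately show ?thesis by blast
qed

lemma T_obj: "X \<in> T \<Longrightarrow> X \<in> Obj C" using psub unfolding proj_subcat_def by blast

lemma T_bip: "X \<in> T \<Longrightarrow> Y \<in> T \<Longrightarrow> is_biproduct C X Y P i1 i2 p1 p2 \<Longrightarrow> P \<in> T"
  using psub unfolding proj_subcat_def by blast

lemma proj_lift: assumes "P \<in> T" "epi C e" "b \<in> Arr C" "Dom C b = P" "Cod C b = Cod C e"
  shows "\<exists>b'. b' \<in> Arr C \<and> Dom C b' = P \<and> Cod C b' = Dom C e \<and> e \<cdot> b' = b"
proof -
  have "projective C P" using psub assms(1) unfolding proj_subcat_def by blast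
  thus ?thesis using assms unfolding projective_def hom_def by blast
qed

section \<open>the ideal of maps factoring through T\<close>

abbreviation "FT f \<equiv> factors_T C T f"

lemma FT_I: "T0 \<in> T \<Longrightarrow> a \<in> Arr C \<Longrightarrow> b \<in> Arr C \<Longrightarrow> Cod C a = T0 \<Longrightarrow> Dom C b = T0 \<Longrightarrow> FT (b \<cdot> a)"
  unfolding factors_T_def hom_def by auto

lemma FT_E: "FT f \<Longrightarrow> (\<And>T0 a b. T0 \<in> T \<Longrightarrow> a \<in> Arr C \<Longrightarrow> b \<in> Arr C \<Longrightarrow> Cod C a = T0
    \<Longrightarrow> Dom C b = T0 \<Longrightarrow> f = b \<cdot> a \<Longrightarrow> thesis) \<Longrightarrow> thesis"
  unfolding factors_T_def hom_def by blast

lemma FT_arr: "FT f \<Longrightarrow> f \<in> Arr C"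
  by (erule FT_E) simp

lemma FT_dom: "f \<in> Arr C \<Longrightarrow> Dom C f \<in> T \<Longrightarrow> FT f"
  using FT_I[of "Dom C f" "Idn C (Dom C f)" f] by simp

lemma FT_cod: "f \<in> Arr C \<Longrightarrow> Cod C f \<in> T \<Longrightarrow> FT f"
  using FT_I[of "Cod C f" f "Idn C (Cod C f)"] by simp

lemma FT_compl: assumes "FT f" "g \<in> Arr C" "Cod C f = Dom C g" shows "FT (g \<cdot> f)"
  using assms(1)
proof (rule FT_E)
  fix T0 a b assume h: "T0 \<in> T" "a \<in> Arr C" "b \<in> Arr C" "Cod C a = T0"
    "Dom C b = T0" "f = b \<cdot> a"
  have "g \<cdot> f = (g \<cdot> b) \<cdot> a" using h assms by simp
  thus "FT (g \<cdot> f)" using FT_I[of T0 a "g \<cdot> b"] h assms by simp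
qed

lemma FT_compr: assumes "FT f" "g \<in> Arr C" "Cod C g = Dom C f" shows "FT (f \<cdot> g)"
  using assms(1)
proof (rule FT_E)
  fix T0 a b assume h: "T0 \<in> T" "a \<in> Arr C" "b \<in> Arr C" "Cod C a = T0"
    "Dom C b = T0" "f = b \<cdot> a"
  have "f \<cdot> g = b \<cdot> (a \<cdot> g)" using h assms by simp
  thus "FT (f \<cdot> g)" using FT_I[of T0 "a \<cdot> g" b] h assms by simp
qed

lemma FT_zero: assumes "X \<in> Obj C" "Y \<in> Obj C" shows "FT (Zer C X Y)"
proof -
  obtain Z where Z: "Z \<in> T" "Z \<in> Obj C" using zero_in_T by blast
  have "Zer C Z Y \<cdot> Zer C X Z = Zer C X Y" using Z assms by simp
  thus ?thesis using FT_I[of Z "Zer C X Z" "Zer C Z Y"] Z assms by auto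
qed

lemma FT_neg: assumes "FT f" shows "FT (ng f)"
  using assms(1)
proof (rule FT_E)
  fix T0 a b assume h: "T0 \<in> T" "a \<in> Arr C" "b \<in> Arr C" "Cod C a = T0"
    "Dom C b = T0" "f = b \<cdot> a"
  have "ng f = ng b \<cdot> a" using h by simp
  thus "FT (ng f)" using FT_I[of T0 a "ng b"] h by simp
qed

lemma FT_add: assumes "FT f" "FT g" "Dom C g = Dom C f" "Cod C g = Cod C f" shows "FT (f \<oplus> g)"
  using assms(1)
proof (rule FT_E)
  fix T0 a b assume h: "T0 \<in> T" "a \<in> Arr C" "b \<in> Arr C" "Cod C a = T0"
    "Dom C b = T0" "f = b \<cdot> a"
  show "FT (f \<oplus> g)"
  using assms(2)
  proof (rule FT_E)
    fix T1 c d assume k: "T1 \<in> T" "c \<in> Arr C" "d \<in> Arr C" "Cod C c = T1"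
      "Dom C d = T1" "g = d \<cdot> c"
    obtain P i1 i2 p1 p2 where B: "is_biproduct C T0 T1 P i1 i2 p1 p2"
      using bip_ex[of T0 T1] T_obj h k by blast
    have PT: "P \<in> T" using T_bip[OF h(1) k(1) B] .
    note bb = bipD[OF B]
    have e1: "p1 \<cdot> (i1 \<cdot> a) = a" "p2 \<cdot> (i1 \<cdot> a) = Zer C (Dom C a) T1"
         "p1 \<cdot> (i2 \<cdot> c) = Zer C (Dom C c) T0" "p2 \<cdot> (i2 \<cdot> c) = c"
      using bb h k assms by (simp_all flip: assoc add: T_obj)
    have "(b \<cdot> p1 \<oplus> d \<cdot> p2) \<cdot> (i1 \<cdot> a \<oplus> i2 \<cdot> c) = f \<oplus> g"
      using bb h k assms e1 T_obj by simp
    thus "FT (f \<oplus> g)" using FT_I[of P "i1 \<cdot> a \<oplus> i2 \<cdot> c" "b \<cdot> p1 \<oplus> d \<cdot> p2"] PT bb h k assms by simp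
  qed
qed

lemma FT_sub: "FT f \<Longrightarrow> FT g \<Longrightarrow> Dom C g = Dom C f \<Longrightarrow> Cod C g = Cod C f \<Longrightarrow> FT (f \<oplus> ng g)"
  using FT_add FT_neg FT_arr by simp


lemma assoc_eq: "a \<cdot> b = c \<Longrightarrow> a \<in> Arr C \<Longrightarrow> b \<in> Arr C \<Longrightarrow> x \<in> Arr C \<Longrightarrow> Cod C x = Dom C b
  \<Longrightarrow> Cod C b = Dom C a \<Longrightarrow> a \<cdot> (b \<cdot> x) = c \<cdot> x"
  using assoc[of x b a] by simp

lemma dc_eq: "x = b \<cdot> a \<Longrightarrow> a \<in> Arr C \<Longrightarrow> b \<in> Arr C \<Longrightarrow> Cod C a = Dom C b \<Longrightarrow> Cod C x = Cod C b \<and> Dom C x = Dom C a"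
  by simp

section \<open>stable notions\<close>

lemma smonoD: "stable_mono C T f \<Longrightarrow> g \<in> Arr C \<Longrightarrow> Cod C g = Dom C f \<Longrightarrow> FT (f \<cdot> g) \<Longrightarrow> FT g"
proof -
  assume a: "stable_mono C T f" "g \<in> Arr C" "Cod C g = Dom C f" "FT (f \<cdot> g)"
  have f: "f \<in> Arr C" using a(1) unfolding stable_mono_def by blast
  have "stable_eq C T (f \<cdot> g) (f \<cdot> Zer C (Dom C g) (Dom C f))"
    unfolding stable_eq_def using a f by simp
  hence "stable_eq C T g (Zer C (Dom C g) (Dom C f))"
    using a f unfolding stable_mono_def by (auto simp: hom_def)
  thus "FT g" unfolding stable_eq_def using a f by simp
qed

lemma smonoI: assumes f: "f \<in> Arr C" and H: "\<And>g. g \<in> Arr C \<Longrightarrow> Cod C g = Dom C f \<Longrightarrow> FT (f \<cdot> g) \<Longrightarrow> FT g"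
  shows "stable_mono C T f"
  unfolding stable_mono_def
proof (intro conjI f allI impI)
  fix W g h assume a: "g \<in> hom C W (Dom C f)" "h \<in> hom C W (Dom C f)" "stable_eq C T (f \<cdot> g) (f \<cdot> h)"
  have "f \<cdot> (g \<oplus> ng h) = f \<cdot> g \<oplus> ng (f \<cdot> h)" using a f by (simp add: hom_def)
  hence "FT (f \<cdot> (g \<oplus> ng h))" using a(3) unfolding stable_eq_def by simp
  hence "FT (g \<oplus> ng h)" using H[of "g \<oplus> ng h"] a by (simp add: hom_def)
  thus "stable_eq C T g h" unfolding stable_eq_def .
qed

lemma sepiD: "stable_epi C T f \<Longrightarrow> g \<in> Arr C \<Longrightarrow> Dom C g = Cod C f \<Longrightarrow> FT (g \<cdot> f) \<Longrightarrow> FT g"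
proof -
  assume a: "stable_epi C T f" "g \<in> Arr C" "Dom C g = Cod C f" "FT (g \<cdot> f)"
  have f: "f \<in> Arr C" using a(1) unfolding stable_epi_def by blast
  have "stable_eq C T (g \<cdot> f) (Zer C (Cod C f) (Cod C g) \<cdot> f)"
    unfolding stable_eq_def using a f by simp
  hence "stable_eq C T g (Zer C (Cod C f) (Cod C g))"
    using a f unfolding stable_epi_def by (auto simp: hom_def)
  thus "FT g" unfolding stable_eq_def using a f by simp
qed

lemma sepiI: assumes f: "f \<in> Arr C" and H: "\<And>g. g \<in> Arr C \<Longrightarrow> Dom C g = Cod C f \<Longrightarrow> FT (g \<cdot> f) \<Longrightarrow> FT g"
  shows "stable_epi C T f"
  unfolding stable_epi_def
proof (intro conjI f allI impI)
  fix W g h assume a: "g \<in> hom C (Cod C f) W" "h \<in> hom C (Cod C f) W" "stable_eq C T (g \<cdot> f) (h \<cdot> f)"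
  have "(g \<oplus> ng h) \<cdot> f = g \<cdot> f \<oplus> ng (h \<cdot> f)" using a f by (simp add: hom_def)
  hence "FT ((g \<oplus> ng h) \<cdot> f)" using a(3) unfolding stable_eq_def by simp
  hence "FT (g \<oplus> ng h)" using H[of "g \<oplus> ng h"] a by (simp add: hom_def)
  thus "stable_eq C T g h" unfolding stable_eq_def .
qed

lemma sisoD: "stable_iso C T f \<Longrightarrow> \<exists>s. s \<in> Arr C \<and> Dom C s = Cod C f \<and> Cod C s = Dom C f \<and>
   FT (f \<cdot> s \<oplus> ng (Idn C (Cod C f)))"
  unfolding stable_iso_def stable_eq_def hom_def by blast

lemma SI: assumes sm: "stable_mono C T f" and s: "s \<in> Arr C" "Dom C s = Cod C f" "Cod C s = Dom C f"
  and ft: "FT (f \<cdot> s \<oplus> ng (Idn C (Cod C f)))"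
  shows "stable_iso C T f"
proof -
  have f: "f \<in> Arr C" using sm unfolding stable_mono_def by blast
  have "f \<cdot> (s \<cdot> f \<oplus> ng (Idn C (Dom C f))) = (f \<cdot> s \<oplus> ng (Idn C (Cod C f))) \<cdot> f"
    using f s by simp
  moreover have "FT ((f \<cdot> s \<oplus> ng (Idn C (Cod C f))) \<cdot> f)" using FT_compr[OF ft] f s by simp
  ultimately have "FT (s \<cdot> f \<oplus> ng (Idn C (Dom C f)))" using smonoD[OF sm, of "s \<cdot> f \<oplus> ng (Idn C (Dom C f))"] f s by simp
  thus ?thesis unfolding stable_iso_def stable_eq_def using f s ft by (auto simp: hom_def)
qed

lemma Smono: assumes e: "epi C f" and k: "is_kernel C f k" and ft: "FT k" shows "stable_mono C T f"
proof (rule smonoI)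
  show f: "f \<in> Arr C" using e epi_arr by blast
  have kk: "k \<in> Arr C" "Cod C k = Dom C f" "f \<cdot> k = Zer C (Dom C k) (Cod C f)" using kerD[OF k] by auto
  fix g assume g: "g \<in> Arr C" "Cod C g = Dom C f" "FT (f \<cdot> g)"
  obtain T0 a b where ab: "T0 \<in> T" "a \<in> Arr C" "b \<in> Arr C" "Cod C a = T0" "Dom C b = T0" "f \<cdot> g = b \<cdot> a"
    using FT_E[OF g(3)] by blast
  have cb: "Cod C b = Cod C f" "Dom C a = Dom C g"
    using g f ab(4,5) dc_eq[OF ab(6) ab(2) ab(3) trans[OF ab(4) ab(5)[symmetric]]] by simp_all
  obtain b' where b': "b' \<in> Arr C" "Dom C b' = T0" "Cod C b' = Dom C f" "f \<cdot> b' = b"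
    using proj_lift[OF ab(1) e ab(3) ab(5) cb(1)] by blast
  have fb: "f \<cdot> (b' \<cdot> a) = b \<cdot> a" using assoc_eq[OF b'(4)] b' ab(1-5) f by simp
  have "f \<cdot> (g \<oplus> ng (b' \<cdot> a)) = f \<cdot> g \<oplus> ng (f \<cdot> (b' \<cdot> a))" using g b' ab f cb by simp
  also have "\<dots> = Zer C (Dom C g) (Cod C f)" using fb ab(6) g f ab cb by simp
  finally have z: "f \<cdot> (g \<oplus> ng (b' \<cdot> a)) = Zer C (Dom C g) (Cod C f)" .
  have ty: "g \<oplus> ng (b' \<cdot> a) \<in> Arr C" "Cod C (g \<oplus> ng (b' \<cdot> a)) = Dom C f" "Dom C (g \<oplus> ng (b' \<cdot> a)) = Dom C g"
    using g b'(1-3) ab(2-5) cb by simp_all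
  obtain u where u: "u \<in> Arr C" "Dom C u = Dom C g" "Cod C u = Dom C k" "k \<cdot> u = g \<oplus> ng (b' \<cdot> a)"
    using ker_fac[OF k ty(1) ty(2)] z ty(3) by auto
  have "FT (k \<cdot> u)" using FT_compr[OF ft u(1) u(3)] .
  hence 1: "FT (g \<oplus> ng (b' \<cdot> a))" by (simp only: u(4))
  have 2: "FT (b' \<cdot> a)" using FT_I[OF ab(1) ab(2) b'(1)] ab(4) b'(2) by simp
  have 3: "FT ((g \<oplus> ng (b' \<cdot> a)) \<oplus> b' \<cdot> a)" using FT_add[OF 1 2] ty b'(1-3) ab(2-5) cb by simp
  have "(g \<oplus> ng (b' \<cdot> a)) \<oplus> b' \<cdot> a = g" using g b'(1-3) ab(2-5) cb by simp
  thus "FT g" using 3 by simp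
qed

lemma Sepi: assumes ef: "epi C f" and k: "is_kernel C f k"
  and H: "\<And>T0 a. T0 \<in> T \<Longrightarrow> a \<in> Arr C \<Longrightarrow> Dom C a = Dom C f \<Longrightarrow> Cod C a = T0 \<Longrightarrow>
     \<exists>e j u. epi C e \<and> j \<in> Arr C \<and> u \<in> Arr C \<and> Dom C e = Dom C k \<and> Cod C e = Dom C j \<and> Cod C j = T0
        \<and> j \<cdot> e = a \<cdot> k \<and> Dom C u = Dom C f \<and> Cod C u = Dom C j \<and> u \<cdot> k = e"
  shows "stable_epi C T f"
proof (rule sepiI)
  show f: "f \<in> Arr C" using ef epi_arr by blast
  have kk: "k \<in> Arr C" "Cod C k = Dom C f" "f \<cdot> k = Zer C (Dom C k) (Cod C f)" using kerD[OF k] by auto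
  have ck: "is_cokernel C k f" using epi_coker[OF ef k] .
  fix g assume g: "g \<in> Arr C" "Dom C g = Cod C f" "FT (g \<cdot> f)"
  obtain T0 a b where ab: "T0 \<in> T" "a \<in> Arr C" "b \<in> Arr C" "Cod C a = T0" "Dom C b = T0" "g \<cdot> f = b \<cdot> a"
    using FT_E[OF g(3)] by blast
  have cb: "Cod C b = Cod C g" "Dom C a = Dom C f"
    using g f ab(4,5) dc_eq[OF ab(6) ab(2) ab(3) trans[OF ab(4) ab(5)[symmetric]]] by simp_all
  obtain e j u where eju: "epi C e" "j \<in> Arr C" "u \<in> Arr C" "Dom C e = Dom C k" "Cod C e = Dom C j" "Cod C j = T0"
     "j \<cdot> e = a \<cdot> k" "Dom C u = Dom C f" "Cod C u = Dom C j" "u \<cdot> k = e"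
    using H[OF ab(1) ab(2) cb(2) ab(4)] by blast
  have e: "e \<in> Arr C" using eju epi_arr by blast
  have jue: "j \<cdot> (u \<cdot> k) = j \<cdot> e" using eju by simp
  have "(a \<oplus> ng (j \<cdot> u)) \<cdot> k = a \<cdot> k \<oplus> ng (j \<cdot> (u \<cdot> k))" using eju ab cb kk by simp
  also have "\<dots> = Zer C (Dom C k) T0" using eju ab cb kk e by simp
  finally obtain a' where a': "a' \<in> Arr C" "Dom C a' = Cod C f" "Cod C a' = T0" "a' \<cdot> f = a \<oplus> ng (j \<cdot> u)"
    using coker_fac[OF ck, of "a \<oplus> ng (j \<cdot> u)"] eju ab cb kk by auto
  have "(b \<cdot> j) \<cdot> e = b \<cdot> (a \<cdot> k)" using eju ab e by simp
  also have "\<dots> = (g \<cdot> f) \<cdot> k" using ab kk cb by simp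
  also have "\<dots> = g \<cdot> (f \<cdot> k)" using g f kk by simp
  finally have "(b \<cdot> j) \<cdot> e = Zer C (Dom C e) (Cod C (b \<cdot> j))" using kk g f eju ab cb e by simp
  hence bj: "b \<cdot> j = Zer C (Dom C j) (Cod C g)" using epi_zero[OF eju(1), of "b \<cdot> j"] eju ab cb e by simp
  have bju: "b \<cdot> (j \<cdot> u) = Zer C (Dom C f) (Cod C g)" using assoc_eq[OF bj] eju ab cb g by simp
  have aa: "a = a' \<cdot> f \<oplus> j \<cdot> u" using a' eju ab cb by simp
  have "g \<cdot> f = b \<cdot> (a' \<cdot> f \<oplus> j \<cdot> u)" using ab(6) aa by simp
  also have "\<dots> = b \<cdot> (a' \<cdot> f) \<oplus> b \<cdot> (j \<cdot> u)" by (rule comp_addr) (use a'(1-3) eju ab cb f g in auto)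
  also have "\<dots> = b \<cdot> (a' \<cdot> f)" using bju a'(1-3) eju ab(2-5) cb f g by simp
  also have "\<dots> = (b \<cdot> a') \<cdot> f" by (rule assoc[symmetric]) (use a'(1-3) eju ab cb f g in auto)
  finally have "g = b \<cdot> a'" using epiD[OF ef, of g "b \<cdot> a'"] g a' ab cb by simp
  thus "FT g" using FT_I[OF ab(1) a'(1) ab(3)] a' ab by simp
qed

lemma Rretr: assumes ef: "epi C f" and si: "stable_iso C T f" shows "retraction C f"
proof -
  have f: "f \<in> Arr C" using ef epi_arr by blast
  obtain s where s: "s \<in> Arr C" "Dom C s = Cod C f" "Cod C s = Dom C f" "FT (f \<cdot> s \<oplus> ng (Idn C (Cod C f)))"
    using sisoD[OF si] by blast
  obtain T0 a b where ab: "T0 \<in> T" "a \<in> Arr C" "b \<in> Arr C" "Cod C a = T0" "Dom C b = T0"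
     "f \<cdot> s \<oplus> ng (Idn C (Cod C f)) = b \<cdot> a"
    using FT_E[OF s(4)] by blast
  have cb: "Cod C b = Cod C f" "Dom C a = Cod C f"
  proof -
    have X: "Cod C (f \<cdot> s \<oplus> ng (Idn C (Cod C f))) = Cod C b \<and> Dom C (f \<cdot> s \<oplus> ng (Idn C (Cod C f))) = Dom C a"
      using dc_eq[OF ab(6) ab(2) ab(3) trans[OF ab(4) ab(5)[symmetric]]] .
    have "Cod C (f \<cdot> s \<oplus> ng (Idn C (Cod C f))) = Cod C f" "Dom C (f \<cdot> s \<oplus> ng (Idn C (Cod C f))) = Cod C f"
      using s f by simp_all
    thus "Cod C b = Cod C f" "Dom C a = Cod C f" using X by simp_all
  qed
  obtain b' where b': "b' \<in> Arr C" "Dom C b' = T0" "Cod C b' = Dom C f" "f \<cdot> b' = b"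
    using proj_lift[OF ab(1) ef ab(3) ab(5) cb(1)] by blast
  have fb: "f \<cdot> (b' \<cdot> a) = b \<cdot> a" using assoc_eq[OF b'(4)] b' ab(1-5) f by simp
  have "f \<cdot> (s \<oplus> ng (b' \<cdot> a)) = f \<cdot> s \<oplus> ng (f \<cdot> s \<oplus> ng (Idn C (Cod C f)))"
    using fb ab(6)[symmetric] s b' ab(1-5) f cb by simp
  also have "\<dots> = Idn C (Cod C f)" using s f by simp
  finally show ?thesis unfolding retraction_def using s b' ab f cb
    by (intro bexI[of _ "s \<oplus> ng (b' \<cdot> a)"]) (auto simp: hom_def)
qed




lemma add_left_comm: "a \<in> Arr C \<Longrightarrow> b \<in> Arr C \<Longrightarrow> c \<in> Arr C \<Longrightarrow> Dom C b = Dom C a \<Longrightarrow> Cod C b = Cod C a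
  \<Longrightarrow> Dom C c = Dom C a \<Longrightarrow> Cod C c = Cod C a \<Longrightarrow> a \<oplus> (b \<oplus> c) = b \<oplus> (a \<oplus> c)"
proof -
  assume h: "a \<in> Arr C" "b \<in> Arr C" "c \<in> Arr C" "Dom C b = Dom C a" "Cod C b = Cod C a"
    "Dom C c = Dom C a" "Cod C c = Cod C a"
  have "a \<oplus> (b \<oplus> c) = (a \<oplus> b) \<oplus> c" using h by simp
  also have "a \<oplus> b = b \<oplus> a" using add_comm[of a b] h by simp
  finally show ?thesis using h by simp
qed

lemma Klem: assumes ge: "epi C g" and mu: "is_kernel C g \<mu>" and se: "stable_epi C T g"
  and T': "T' \<in> T" and h: "h \<in> Arr C" "Dom C h = Dom C g" "Cod C h = T'"
  and ej: "epi C e" "mono C j" "Dom C e = Dom C \<mu>" "Cod C e = Dom C j" "Cod C j = T'" "j \<cdot> e = h \<cdot> \<mu>"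
  shows "\<exists>g' u. g' \<in> Arr C \<and> Dom C g' = Cod C g \<and> Cod C g' = T' \<and> u \<in> Arr C \<and> Dom C u = Dom C g
     \<and> Cod C u = Dom C j \<and> h \<oplus> ng (g' \<cdot> g) = j \<cdot> u \<and> u \<cdot> \<mu> = e"
proof -
  have g: "g \<in> Arr C" using ge epi_arr by blast
  have mm: "\<mu> \<in> Arr C" "Cod C \<mu> = Dom C g" "g \<cdot> \<mu> = Zer C (Dom C \<mu>) (Cod C g)" using kerD[OF mu] by auto
  have e: "e \<in> Arr C" using ej epi_arr by blast
  have j: "j \<in> Arr C" using ej mono_arr by blast
  obtain d where d: "is_cokernel C j d" using coker_ex[OF j] by blast
  have dd: "d \<in> Arr C" "Dom C d = T'" "d \<cdot> j = Zer C (Dom C j) (Cod C d)" using cokerD[OF d] ej by auto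
  have dk: "is_kernel C d j" using mono_ker[OF ej(2) d] .
  have dep: "epi C d" using coker_epi[OF d] .
  have gc: "is_cokernel C \<mu> g" using epi_coker[OF ge mu] .
  have "d \<cdot> (j \<cdot> e) = Zer C (Dom C j) (Cod C d) \<cdot> e" using assoc_eq[OF dd(3) dd(1) j e] ej(4,5) dd(2) by simp
  hence "d \<cdot> (h \<cdot> \<mu>) = Zer C (Dom C \<mu>) (Cod C d)" using ej e dd j by simp
  hence "(d \<cdot> h) \<cdot> \<mu> = Zer C (Dom C \<mu>) (Cod C d)" using h mm dd by simp
  then obtain w where w: "w \<in> Arr C" "Dom C w = Cod C g" "Cod C w = Cod C d" "w \<cdot> g = d \<cdot> h"
    using coker_fac[OF gc, of "d \<cdot> h"] h mm dd by auto
  have "FT (d \<cdot> h)" using FT_I[OF T' h(1) dd(1) h(3) dd(2)] .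
  hence "FT (w \<cdot> g)" using w(4) by simp
  hence "FT w" using sepiD[OF se w(1) w(2)] by blast
  then obtain T2 \<alpha> \<beta> where ab: "T2 \<in> T" "\<alpha> \<in> Arr C" "\<beta> \<in> Arr C" "Cod C \<alpha> = T2" "Dom C \<beta> = T2" "w = \<beta> \<cdot> \<alpha>"
    by (rule FT_E) blast
  have cb: "Cod C \<beta> = Cod C d" "Dom C \<alpha> = Cod C g"
    using w(1-3) ab(4,5) dc_eq[OF ab(6) ab(2) ab(3) trans[OF ab(4) ab(5)[symmetric]]] by simp_all
  obtain \<beta>' where b': "\<beta>' \<in> Arr C" "Dom C \<beta>' = T2" "Cod C \<beta>' = Dom C d" "d \<cdot> \<beta>' = \<beta>"
    using proj_lift[OF ab(1) dep ab(3) ab(5) cb(1)] by blast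
  have db: "d \<cdot> (\<beta>' \<cdot> (\<alpha> \<cdot> g)) = w \<cdot> g"
    using assoc_eq[OF b'(4) dd(1) b'(1), of "\<alpha> \<cdot> g"] ab(2-5) cb b'(2,3) g ab(6) by simp
  have ty: "h \<oplus> ng ((\<beta>' \<cdot> \<alpha>) \<cdot> g) \<in> Arr C" "Cod C (h \<oplus> ng ((\<beta>' \<cdot> \<alpha>) \<cdot> g)) = Dom C d"
      "Dom C (h \<oplus> ng ((\<beta>' \<cdot> \<alpha>) \<cdot> g)) = Dom C g"
    using h g ab(2-5) cb b'(1-3) dd(2) by simp_all
  have "d \<cdot> (h \<oplus> ng ((\<beta>' \<cdot> \<alpha>) \<cdot> g)) = d \<cdot> h \<oplus> ng (d \<cdot> (\<beta>' \<cdot> (\<alpha> \<cdot> g)))"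
    using h g ab(2-5) cb b'(1-3) dd by simp
  also have "\<dots> = Zer C (Dom C g) (Cod C d)" using db w(4) h dd by simp
  finally have z: "d \<cdot> (h \<oplus> ng ((\<beta>' \<cdot> \<alpha>) \<cdot> g)) = Zer C (Dom C g) (Cod C d)" .
  obtain u where u: "u \<in> Arr C" "Dom C u = Dom C g" "Cod C u = Dom C j" "j \<cdot> u = h \<oplus> ng ((\<beta>' \<cdot> \<alpha>) \<cdot> g)"
    using ker_fac[OF dk ty(1) ty(2)] z ty(3) by auto
  have "j \<cdot> (u \<cdot> \<mu>) = (j \<cdot> u) \<cdot> \<mu>" using u(1-3) j mm by simp
  also have "\<dots> = h \<cdot> \<mu> \<oplus> ng ((\<beta>' \<cdot> \<alpha>) \<cdot> (g \<cdot> \<mu>))" using u(4) h g ab(2-5) cb b'(1-3) mm(1,2) dd(2) by simp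
  also have "\<dots> = j \<cdot> e" using mm ej(6) h g ab(2-5) cb b'(1-3) dd(2) T_obj[OF T'] by simp
  finally have "u \<cdot> \<mu> = e" using monoD[OF ej(2), of "u \<cdot> \<mu>" e] u mm e ej by simp
  thus ?thesis using u ab(2-5) cb b'(1-3) g dd(2)
    by (intro exI[of _ "\<beta>' \<cdot> \<alpha>"] exI[of _ u]) simp
qed

lemma retr_split: assumes k: "is_kernel C c \<mu>" and r: "retraction C c" shows "split_mono C \<mu>"
proof -
  have kk: "c \<in> Arr C" "\<mu> \<in> Arr C" "Cod C \<mu> = Dom C c" "c \<cdot> \<mu> = Zer C (Dom C \<mu>) (Cod C c)" using kerD[OF k] by auto
  obtain s where s: "s \<in> Arr C" "Dom C s = Cod C c" "Cod C s = Dom C c" "c \<cdot> s = Idn C (Cod C c)"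
    using r unfolding retraction_def hom_def by blast
  have cs: "c \<cdot> (s \<cdot> c) = c" using assoc_eq[OF s(4) kk(1) s(1) kk(1)] s kk by simp
  have "c \<cdot> (Idn C (Dom C c) \<oplus> ng (s \<cdot> c)) = Zer C (Dom C c) (Cod C c)" using cs s kk by simp
  then obtain r where r: "r \<in> Arr C" "Dom C r = Dom C c" "Cod C r = Dom C \<mu>" "\<mu> \<cdot> r = Idn C (Dom C c) \<oplus> ng (s \<cdot> c)"
    using ker_fac[OF k, of "Idn C (Dom C c) \<oplus> ng (s \<cdot> c)"] s kk by auto
  have "\<mu> \<cdot> (r \<cdot> \<mu>) = (Idn C (Dom C c) \<oplus> ng (s \<cdot> c)) \<cdot> \<mu>" using assoc_eq[OF r(4) kk(2) r(1) kk(2)] r kk by simp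
  also have "\<dots> = \<mu> \<cdot> Idn C (Dom C \<mu>)" using s kk by simp
  finally have "r \<cdot> \<mu> = Idn C (Dom C \<mu>)" using monoD[OF ker_mono[OF k], of "r \<cdot> \<mu>" "Idn C (Dom C \<mu>)"] r kk by simp
  thus ?thesis unfolding split_mono_def using r kk by (auto simp: hom_def)
qed

lemma split_retr: assumes ce: "epi C c" and k: "is_kernel C c \<mu>" and sp: "split_mono C \<mu>" shows "retraction C c"
proof -
  have kk: "c \<in> Arr C" "\<mu> \<in> Arr C" "Cod C \<mu> = Dom C c" "c \<cdot> \<mu> = Zer C (Dom C \<mu>) (Cod C c)" using kerD[OF k] by auto
  obtain r where r: "r \<in> Arr C" "Dom C r = Cod C \<mu>" "Cod C r = Dom C \<mu>" "r \<cdot> \<mu> = Idn C (Dom C \<mu>)"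
    using sp unfolding split_mono_def hom_def by blast
  have ck: "is_cokernel C \<mu> c" using epi_coker[OF ce k] .
  have mr: "\<mu> \<cdot> (r \<cdot> \<mu>) = \<mu>" using r kk by simp
  have "(Idn C (Dom C c) \<oplus> ng (\<mu> \<cdot> r)) \<cdot> \<mu> = Zer C (Dom C \<mu>) (Dom C c)" using mr r kk by simp
  then obtain s where s: "s \<in> Arr C" "Dom C s = Cod C c" "Cod C s = Dom C c" "s \<cdot> c = Idn C (Dom C c) \<oplus> ng (\<mu> \<cdot> r)"
    using coker_fac[OF ck, of "Idn C (Dom C c) \<oplus> ng (\<mu> \<cdot> r)"] r kk by auto
  have cm: "c \<cdot> (\<mu> \<cdot> r) = Zer C (Dom C c) (Cod C c)" using assoc_eq[OF kk(4) kk(1) kk(2) r(1)] r kk by simp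
  have "(c \<cdot> s) \<cdot> c = c \<cdot> (s \<cdot> c)" using s kk by simp
  also have "\<dots> = c" using s(4) cm s(1-3) kk r by simp
  also have "\<dots> = Idn C (Cod C c) \<cdot> c" using kk by simp
  finally have "c \<cdot> s = Idn C (Cod C c)" using epiD[OF ce, of "c \<cdot> s" "Idn C (Cod C c)"] s kk by simp
  thus ?thesis unfolding retraction_def using s by (auto simp: hom_def)
qed

lemma add_eq_zero: "a \<in> Arr C \<Longrightarrow> b \<in> Arr C \<Longrightarrow> Dom C b = Dom C a \<Longrightarrow> Cod C b = Cod C a
  \<Longrightarrow> a \<oplus> b = Zer C (Dom C a) (Cod C a) \<Longrightarrow> a = ng b"
proof -
  assume h: "a \<in> Arr C" "b \<in> Arr C" "Dom C b = Dom C a" "Cod C b = Cod C a" "a \<oplus> b = Zer C (Dom C a) (Cod C a)"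
  have "b \<oplus> a = a \<oplus> b" by (rule add_comm) (use h in auto)
  hence "b \<oplus> a = Zer C (Dom C b) (Cod C b)" using h by simp
  thus "a = ng b" using neg_unique[of b a] h by simp
qed

lemma bipN: assumes B: "is_biproduct C X Y P i1 i2 p1 p2"
  shows "\<And>x. x \<in> Arr C \<Longrightarrow> Cod C x = X \<Longrightarrow> p1 \<cdot> (i1 \<cdot> x) = x"
    "\<And>x. x \<in> Arr C \<Longrightarrow> Cod C x = X \<Longrightarrow> p2 \<cdot> (i1 \<cdot> x) = Zer C (Dom C x) Y"
    "\<And>x. x \<in> Arr C \<Longrightarrow> Cod C x = Y \<Longrightarrow> p1 \<cdot> (i2 \<cdot> x) = Zer C (Dom C x) X"
    "\<And>x. x \<in> Arr C \<Longrightarrow> Cod C x = Y \<Longrightarrow> p2 \<cdot> (i2 \<cdot> x) = x"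
proof -
  note bb = bipD[OF B]
  have o: "X \<in> Obj C" "Y \<in> Obj C" using bb arr_dom arr_cod by metis+
  fix x assume x: "x \<in> Arr C"
  { assume "Cod C x = X" thus "p1 \<cdot> (i1 \<cdot> x) = x" using assoc[of x i1 p1] x bb by simp }
  { assume "Cod C x = X" thus "p2 \<cdot> (i1 \<cdot> x) = Zer C (Dom C x) Y" using assoc[of x i1 p2] x bb o by simp }
  { assume "Cod C x = Y" thus "p1 \<cdot> (i2 \<cdot> x) = Zer C (Dom C x) X" using assoc[of x i2 p1] x bb o by simp }
  { assume "Cod C x = Y" thus "p2 \<cdot> (i2 \<cdot> x) = x" using assoc[of x i2 p2] x bb by simp }
qed

lemma Red1: assumes f: "f \<in> Arr C" and sm: "stable_mono C T f" and se: "stable_epi C T f"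
  and ni: "\<not> stable_iso C T f"
  shows "\<exists>f' k'. epi C f' \<and> is_kernel C f' k' \<and> FT k' \<and> stable_epi C T f' \<and> \<not> stable_iso C T f'"
proof -
  obtain c where c: "is_cokernel C f c" using coker_ex[OF f] by blast
  have cc: "c \<in> Arr C" "Dom C c = Cod C f" "c \<cdot> f = Zer C (Dom C f) (Cod C c)" using cokerD[OF c] by auto
  have cep: "epi C c" using coker_epi[OF c] .
  have "FT (c \<cdot> f)" using cc FT_zero f by simp
  hence "FT c" using sepiD[OF se cc(1) cc(2)] by blast
  then obtain T0 a b where ab: "T0 \<in> T" "a \<in> Arr C" "b \<in> Arr C" "Cod C a = T0" "Dom C b = T0" "c = b \<cdot> a"
    by (rule FT_E) blast
  have cb: "Cod C b = Cod C c" "Dom C a = Cod C f"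
    using cc(1,2) ab(4,5) dc_eq[OF ab(6) ab(2) ab(3) trans[OF ab(4) ab(5)[symmetric]]] by simp_all
  have bep: "epi C b" using epi_cancel[of b a] cep ab by simp
  obtain t where t: "t \<in> Arr C" "Dom C t = T0" "Cod C t = Cod C f" "c \<cdot> t = b"
    using proj_lift[OF ab(1) cep ab(3) ab(5) cb(1)] cc by auto
  have T0o: "T0 \<in> Obj C" using T_obj[OF ab(1)] .
  obtain S i1 i2 p1 p2 where B: "is_biproduct C (Dom C f) T0 S i1 i2 p1 p2" using bip_ex[OF arr_dom[OF f] T0o] by blast
  note bb = bipD[OF B]
  define f' where "f' = f \<cdot> p1 \<oplus> t \<cdot> p2"
  have f'a: "f' \<in> Arr C" "Dom C f' = S" "Cod C f' = Cod C f" unfolding f'_def using bb f t by simp_all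
  have fi1: "f' \<cdot> i1 = f" unfolding f'_def using bb f t T0o by simp
  have fi2: "f' \<cdot> i2 = t" unfolding f'_def using bb f t T0o by simp
  have fep: "epi C f'"
  proof (rule epiI0[OF f'a(1)])
    fix \<phi> assume ph: "\<phi> \<in> Arr C" "Dom C \<phi> = Cod C f'" "\<phi> \<cdot> f' = Zer C (Dom C f') (Cod C \<phi>)"
    have z1: "\<phi> \<cdot> (f' \<cdot> i1) = Zer C (Dom C f) (Cod C \<phi>)"
      using assoc[of i1 f' \<phi>] ph f'a bb by simp
    hence "\<phi> \<cdot> f = Zer C (Dom C f) (Cod C \<phi>)" using fi1 by simp
    then obtain \<psi> where psi: "\<psi> \<in> Arr C" "Dom C \<psi> = Cod C c" "Cod C \<psi> = Cod C \<phi>" "\<psi> \<cdot> c = \<phi>"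
      using coker_fac[OF c, of \<phi>] ph f'a by auto
    have z2: "\<phi> \<cdot> (f' \<cdot> i2) = Zer C T0 (Cod C \<phi>)"
      using assoc[of i2 f' \<phi>] ph f'a bb by simp
    have "\<psi> \<cdot> b = \<psi> \<cdot> (c \<cdot> t)" using t by simp
    also have "\<dots> = \<phi> \<cdot> t" using assoc[of t c \<psi>] psi t cc by simp
    also have "\<dots> = Zer C T0 (Cod C \<phi>)" using z2 fi2 by simp
    finally have "\<psi> = Zer C (Cod C b) (Cod C \<psi>)" using epi_zero[OF bep psi(1)] psi cb ab(5) by simp
    thus "\<phi> = Zer C (Cod C f') (Cod C \<phi>)" using psi(4) psi(1-3) cc cb f'a ph(1) by simp
  qed
  have sef: "stable_epi C T f'"
  proof (rule sepiI[OF f'a(1)])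
    fix w assume w: "w \<in> Arr C" "Dom C w = Cod C f'" "FT (w \<cdot> f')"
    have "FT ((w \<cdot> f') \<cdot> i1)" using FT_compr[OF w(3)] bb w f'a by simp
    moreover have "(w \<cdot> f') \<cdot> i1 = w \<cdot> f" using assoc[of i1 f' w] bb w f'a fi1 by simp
    ultimately have "FT (w \<cdot> f)" by simp
    thus "FT w" using sepiD[OF se w(1)] w f'a by simp
  qed
  obtain k' where k': "is_kernel C f' k'" using ker_ex[OF f'a(1)] by blast
  have kk: "k' \<in> Arr C" "Cod C k' = S" "f' \<cdot> k' = Zer C (Dom C k') (Cod C f)" using kerD[OF k'] f'a by auto
  have "f \<cdot> (p1 \<cdot> k') \<oplus> t \<cdot> (p2 \<cdot> k') = f' \<cdot> k'" unfolding f'_def using bb f t kk by simp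
  hence "f \<cdot> (p1 \<cdot> k') = ng (t \<cdot> (p2 \<cdot> k'))" using add_eq_zero[of "f \<cdot> (p1 \<cdot> k')" "t \<cdot> (p2 \<cdot> k')"] bb f t kk by simp
  moreover have "FT (ng (t \<cdot> (p2 \<cdot> k')))" using FT_neg FT_I[OF ab(1), of "p2 \<cdot> k'" t] bb t kk by simp
  ultimately have "FT (f \<cdot> (p1 \<cdot> k'))" by simp
  hence f1: "FT (p1 \<cdot> k')" using smonoD[OF sm, of "p1 \<cdot> k'"] bb kk by simp
  have f2: "FT (p2 \<cdot> k')" using FT_cod[of "p2 \<cdot> k'"] bb kk ab(1) by simp
  have "FT (i1 \<cdot> (p1 \<cdot> k') \<oplus> i2 \<cdot> (p2 \<cdot> k'))"
    using FT_add[OF FT_compl[OF f1, of i1] FT_compl[OF f2, of i2]] bb kk by simp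
  moreover have "i1 \<cdot> (p1 \<cdot> k') \<oplus> i2 \<cdot> (p2 \<cdot> k') = k'"
  proof -
    have "(i1 \<cdot> p1 \<oplus> i2 \<cdot> p2) \<cdot> k' = (i1 \<cdot> p1) \<cdot> k' \<oplus> (i2 \<cdot> p2) \<cdot> k'" by (rule comp_addl) (use bb kk in auto)
    moreover have "(i1 \<cdot> p1) \<cdot> k' = i1 \<cdot> (p1 \<cdot> k')" "(i2 \<cdot> p2) \<cdot> k' = i2 \<cdot> (p2 \<cdot> k')" by (rule assoc; use bb kk in auto)+
    moreover have "(i1 \<cdot> p1 \<oplus> i2 \<cdot> p2) \<cdot> k' = k'" using bb kk by simp
    ultimately show ?thesis by simp
  qed
  ultimately have ftk: "FT k'" by simp
  have nif: "\<not> stable_iso C T f'"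
  proof
    assume si: "stable_iso C T f'"
    obtain s where s: "s \<in> Arr C" "Dom C s = Cod C f" "Cod C s = S" "FT (f' \<cdot> s \<oplus> ng (Idn C (Cod C f)))"
      using sisoD[OF si] f'a by auto
    let ?A = "f \<cdot> (p1 \<cdot> s)" and ?B = "t \<cdot> (p2 \<cdot> s)" and ?I = "Idn C (Cod C f)"
    have ty: "?A \<in> Arr C" "?B \<in> Arr C" "ng ?I \<in> Arr C" "Dom C ?A = Cod C f" "Cod C ?A = Cod C f"
      "Dom C ?B = Cod C f" "Cod C ?B = Cod C f" "Dom C (ng ?I) = Cod C f" "Cod C (ng ?I) = Cod C f"
      using bb s t f by simp_all
    have "f' \<cdot> s \<oplus> ng ?I = ?A \<oplus> (?B \<oplus> ng ?I)" unfolding f'_def using bb s t f by simp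
    also have "\<dots> = ?B \<oplus> (?A \<oplus> ng ?I)" using add_left_comm[of ?A ?B "ng ?I"] ty by simp
    finally have e1: "f' \<cdot> s \<oplus> ng ?I = ?B \<oplus> (?A \<oplus> ng ?I)" .
    have nb: "FT (ng ?B)" using FT_neg FT_I[OF ab(1), of "p2 \<cdot> s" t] bb t s by simp
    have "FT (ng ?B \<oplus> (f' \<cdot> s \<oplus> ng ?I))" using FT_add[OF nb s(4)] ty f'a s by simp
    hence "FT (?A \<oplus> ng ?I)" unfolding e1 using ty by simp
    hence "FT ((f \<cdot> (p1 \<cdot> s)) \<oplus> ng (Idn C (Cod C f)))" by simp
    hence "stable_iso C T f" using SI[OF sm, of "p1 \<cdot> s"] bb s f by simp
    thus False using ni by blast
  qed
  show ?thesis using fep k' ftk sef nif by blast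
qed


lemma Red2: assumes ef: "epi C f" and k: "is_kernel C f k" and ftk: "FT k" and se: "stable_epi C T f"
  and ni: "\<not> stable_iso C T f"
  shows "\<exists>g \<mu>. epi C g \<and> is_kernel C g \<mu> \<and> Dom C \<mu> \<in> T \<and> stable_epi C T g \<and> stable_mono C T g
     \<and> \<not> retraction C g"
proof -
  have f: "f \<in> Arr C" using ef epi_arr by blast
  have kk: "k \<in> Arr C" "Cod C k = Dom C f" "f \<cdot> k = Zer C (Dom C k) (Cod C f)" using kerD[OF k] by auto
  have km: "mono C k" using ker_mono[OF k] .
  have fck: "is_cokernel C k f" using epi_coker[OF ef k] .
  have smf: "stable_mono C T f" using Smono[OF ef k ftk] .
  obtain T0 a b where ab: "T0 \<in> T" "a \<in> Arr C" "b \<in> Arr C" "Cod C a = T0" "Dom C b = T0" "k = b \<cdot> a"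
    using ftk by (rule FT_E) blast
  have cb: "Cod C b = Dom C f" "Dom C a = Dom C k"
    using kk(1,2) ab(4,5) dc_eq[OF ab(6) ab(2) ab(3) trans[OF ab(4) ab(5)[symmetric]]] by simp_all
  have T0o: "T0 \<in> Obj C" using T_obj[OF ab(1)] .
  obtain S i1 i2 p1 p2 where B: "is_biproduct C (Dom C f) T0 S i1 i2 p1 p2" using bip_ex[OF arr_dom[OF f] T0o] by blast
  note bb = bipD[OF B] bipN[OF B]
  have bt: "S \<in> Obj C" "i1 \<in> Arr C" "i2 \<in> Arr C" "p1 \<in> Arr C" "p2 \<in> Arr C"
    "Dom C i1 = Dom C f" "Cod C i1 = S" "Dom C i2 = T0" "Cod C i2 = S"
    "Dom C p1 = S" "Cod C p1 = Dom C f" "Dom C p2 = S" "Cod C p2 = T0" using bipD[OF B] by simp_all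
  have idS: "i1 \<cdot> p1 \<oplus> i2 \<cdot> p2 = Idn C S" using bipD[OF B] by simp
  define m where "m = i1 \<cdot> k \<oplus> ng (i2 \<cdot> a)"
  have ma: "m \<in> Arr C" "Dom C m = Dom C k" "Cod C m = S" unfolding m_def using bb kk ab(2-5) cb by simp_all
  have p1m: "p1 \<cdot> m = k" unfolding m_def using bb kk ab(2-5) cb T0o f by simp
  have p2m: "p2 \<cdot> m = ng a" unfolding m_def using bb kk ab(2-5) cb T0o f by simp
  have mm: "mono C m" using mono_cancel[of p1 m] p1m km bb ma by simp
  obtain c where c: "is_cokernel C m c" using coker_ex[OF ma(1)] by blast
  have cc: "c \<in> Arr C" "Dom C c = S" "c \<cdot> m = Zer C (Dom C k) (Cod C c)" using cokerD[OF c] ma by auto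
  have cep: "epi C c" using coker_epi[OF c] .
  have cmk: "is_kernel C c m" using mono_ker[OF mm c] .
  define P where "P = Cod C c"
  have Po: "P \<in> Obj C" unfolding P_def using cc by simp
  have "(f \<cdot> p1) \<cdot> m = Zer C (Dom C m) (Cod C (f \<cdot> p1))" using assoc[of m p1 f] p1m kk bb ma f by simp
  then obtain g where g: "g \<in> Arr C" "Dom C g = P" "Cod C g = Cod C f" "g \<cdot> c = f \<cdot> p1"
    using coker_fac[OF c, of "f \<cdot> p1"] bb ma f unfolding P_def by auto
  define \<iota> where "\<iota> = c \<cdot> i1"
  define \<mu> where "\<mu> = c \<cdot> i2"
  have ia: "\<iota> \<in> Arr C" "Dom C \<iota> = Dom C f" "Cod C \<iota> = P" unfolding \<iota>_def P_def using cc bb by simp_all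
  have mua: "\<mu> \<in> Arr C" "Dom C \<mu> = T0" "Cod C \<mu> = P" unfolding \<mu>_def P_def using cc bb by simp_all
  have gi: "g \<cdot> \<iota> = f"
  proof -
    have "g \<cdot> \<iota> = (g \<cdot> c) \<cdot> i1" unfolding \<iota>_def using assoc[of i1 c g] g(1,2) cc bb P_def by simp
    thus ?thesis using g(4) bb f T0o by simp
  qed
  have gmu: "g \<cdot> \<mu> = Zer C T0 (Cod C f)"
  proof -
    have "g \<cdot> \<mu> = (g \<cdot> c) \<cdot> i2" unfolding \<mu>_def using assoc[of i2 c g] g(1,2) cc bb P_def by simp
    thus ?thesis using g(4) bb f T0o by simp
  qed
  have gep: "epi C g" using epi_cancel[of g \<iota>] gi ef g ia by simp
  have mumono: "mono C \<mu>"
  proof (rule monoI0[OF mua(1)])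
    fix z assume z: "z \<in> Arr C" "Cod C z = Dom C \<mu>" "\<mu> \<cdot> z = Zer C (Dom C z) (Cod C \<mu>)"
    have "c \<cdot> (i2 \<cdot> z) = Zer C (Dom C (i2 \<cdot> z)) (Cod C c)"
      using z unfolding \<mu>_def using assoc[of z i2 c] cc bb by simp
    then obtain v where v: "v \<in> Arr C" "Dom C v = Dom C z" "Cod C v = Dom C m" "m \<cdot> v = i2 \<cdot> z"
      using ker_fac[OF cmk, of "i2 \<cdot> z"] z mua bb cc by auto
    have "k \<cdot> v = (p1 \<cdot> m) \<cdot> v" using p1m by simp
    also have "\<dots> = p1 \<cdot> (i2 \<cdot> z)" using assoc[of v m p1] v(1-3) ma bb v(4) by simp
    also have "\<dots> = Zer C (Dom C v) (Cod C k)" using assoc[of z i2 p1, symmetric] z mua bb v kk by simp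
    finally have "v = Zer C (Dom C v) (Dom C k)" using mono_zero[OF km v(1)] v ma by simp
    hence "i2 \<cdot> z = Zer C (Dom C z) S" using v(4) v(1-3) ma z by simp
    hence "p2 \<cdot> (i2 \<cdot> z) = Zer C (Dom C z) T0" using bb z by simp
    thus "z = Zer C (Dom C z) (Dom C \<mu>)" using assoc[of z i2 p2] bb z mua by simp
  qed
  have gck: "is_cokernel C \<mu> g"
  proof (rule is_cokernelI)
    show "\<mu> \<in> Arr C" "g \<in> Arr C" "epi C g" "Dom C g = Cod C \<mu>" "g \<cdot> \<mu> = Zer C (Dom C \<mu>) (Cod C g)"
      using mua g gep gmu by simp_all
  next
    fix \<psi> assume ps: "\<psi> \<in> Arr C" "Dom C \<psi> = Cod C \<mu>" "\<psi> \<cdot> \<mu> = Zer C (Dom C \<mu>) (Cod C \<psi>)"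
    have psi2: "\<psi> \<cdot> (c \<cdot> i2) = Zer C T0 (Cod C \<psi>)" using ps mua unfolding \<mu>_def by simp
    have "c \<cdot> (i1 \<cdot> k) \<oplus> ng (c \<cdot> (i2 \<cdot> a)) = c \<cdot> m" unfolding m_def using bb cc kk ab(2-5) cb by simp
    hence "c \<cdot> (i1 \<cdot> k) = c \<cdot> (i2 \<cdot> a)" using sub_zero_iff[of "c \<cdot> (i1 \<cdot> k)" "c \<cdot> (i2 \<cdot> a)"] cc bb kk ab(2-5) cb by simp
    hence "\<psi> \<cdot> (c \<cdot> (i1 \<cdot> k)) = \<psi> \<cdot> (c \<cdot> (i2 \<cdot> a))" by simp
    also have "\<dots> = (\<psi> \<cdot> (c \<cdot> i2)) \<cdot> a" using ps(1,2) mua cc bb ab(2-5) cb unfolding \<mu>_def P_def by simp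
    also have "\<dots> = Zer C (Dom C k) (Cod C \<psi>)" using psi2 ps ab(2-5) cb by simp
    finally have "(\<psi> \<cdot> \<iota>) \<cdot> k = Zer C (Dom C k) (Cod C (\<psi> \<cdot> \<iota>))" using ps mua ia cc bb kk unfolding \<iota>_def \<mu>_def P_def by simp
    then obtain l where l: "l \<in> Arr C" "Dom C l = Cod C f" "Cod C l = Cod C \<psi>" "l \<cdot> f = \<psi> \<cdot> \<iota>"
      using coker_fac[OF fck, of "\<psi> \<cdot> \<iota>"] ps ia mua kk by auto
    have lf: "\<psi> \<cdot> (c \<cdot> i1) = l \<cdot> f" using l(4) unfolding \<iota>_def by simp
    have "\<psi> \<cdot> c = (\<psi> \<cdot> c) \<cdot> (i1 \<cdot> p1 \<oplus> i2 \<cdot> p2)" unfolding idS using bt ps(1,2) mua cc unfolding \<mu>_def P_def by simp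
    also have "\<dots> = (\<psi> \<cdot> (c \<cdot> i1)) \<cdot> p1 \<oplus> (\<psi> \<cdot> (c \<cdot> i2)) \<cdot> p2"
      using bt ps(1,2) mua cc unfolding \<mu>_def P_def by simp
    also have "\<dots> = (l \<cdot> f) \<cdot> p1 \<oplus> Zer C T0 (Cod C \<psi>) \<cdot> p2" by (simp only: lf psi2)
    also have "\<dots> = (l \<cdot> f) \<cdot> p1" using l(1-3) f bt T0o ps(1) by simp
    also have "\<dots> = l \<cdot> (g \<cdot> c)" using g(4) l(1-3) f bt by simp
    also have "\<dots> = (l \<cdot> g) \<cdot> c" using l g cc P_def by simp
    finally have eq: "\<psi> \<cdot> c = (l \<cdot> g) \<cdot> c" .
    have lg: "\<psi> = l \<cdot> g"
      by (rule epiD[OF cep ps(1) _ _ _ _ eq]) (use ps(1,2) l(1-3) g(1-3) cc mua P_def in simp_all)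
    show "\<exists>u. u \<in> Arr C \<and> Dom C u = Cod C g \<and> Cod C u = Cod C \<psi> \<and> u \<cdot> g = \<psi>"
      by (rule exI[of _ l]) (use l(1-3) g(1-3) lg in simp)
  qed
  have gk: "is_kernel C g \<mu>" using mono_ker[OF mumono gck] .
  have seg: "stable_epi C T g"
  proof (rule sepiI[OF g(1)])
    fix w assume w: "w \<in> Arr C" "Dom C w = Cod C g" "FT (w \<cdot> g)"
    have "FT ((w \<cdot> g) \<cdot> \<iota>)" using FT_compr[OF w(3) ia(1)] ia g w by simp
    hence "FT (w \<cdot> f)" using assoc[of \<iota> g w] gi ia g w by simp
    thus "FT w" using sepiD[OF se w(1)] w g by simp
  qed
  have smg: "stable_mono C T g" using Smono[OF gep gk FT_dom[OF mua(1)]] mua ab(1) by simp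
  have nr: "\<not> retraction C g"
  proof
    assume "retraction C g"
    then obtain s where s: "s \<in> Arr C" "Dom C s = Cod C f" "Cod C s = P" "g \<cdot> s = Idn C (Cod C f)"
      using g unfolding retraction_def hom_def by auto
    have "(p1 \<oplus> b \<cdot> p2) \<cdot> m = Zer C (Dom C m) (Dom C f)"
      using p1m p2m bb ab(2-6) cb ma kk by (simp add: assoc_eq[OF p2m])
    then obtain r where r: "r \<in> Arr C" "Dom C r = P" "Cod C r = Dom C f" "r \<cdot> c = p1 \<oplus> b \<cdot> p2"
      using coker_fac[OF c, of "p1 \<oplus> b \<cdot> p2"] bb ab(2-5) cb ma unfolding P_def by auto
    have ri: "r \<cdot> \<iota> = Idn C (Dom C f)"
    proof -
      have "r \<cdot> \<iota> = (r \<cdot> c) \<cdot> i1" unfolding \<iota>_def using assoc[of i1 c r] r cc bb P_def by simp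
      thus ?thesis using r(4) bb ab(2-5) cb T0o f by simp
    qed
    define W where "W = \<iota> \<cdot> r \<oplus> ng (Idn C P)"
    have Wa: "W \<in> Arr C" "Dom C W = P" "Cod C W = P" unfolding W_def using ia r Po by simp_all
    have Wi: "W \<cdot> \<iota> = Zer C (Dom C f) P" unfolding W_def using ia r ri Po by simp
    define D where "D = s \<cdot> g \<oplus> ng (Idn C P)"
    have Da: "D \<in> Arr C" "Dom C D = P" "Cod C D = P" unfolding D_def using s g Po by simp_all
    have "g \<cdot> D = Zer C P (Cod C f)" unfolding D_def using s g Po assoc_eq[OF s(4)] by simp
    hence "FT (g \<cdot> D)" using FT_zero Po f by simp
    hence ftD: "FT D" using smonoD[OF smg Da(1)] Da g by simp
    have "FT ((W \<cdot> D) \<cdot> \<iota>)" using FT_compr[OF FT_compl[OF ftD Wa(1)] ia(1)] Da Wa ia by simp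
    moreover have "(W \<cdot> D) \<cdot> \<iota> = (W \<cdot> s) \<cdot> f"
    proof -
      have gi2: "\<And>x. x \<in> Arr C \<Longrightarrow> Cod C x = Dom C \<iota> \<Longrightarrow> W \<cdot> (\<iota> \<cdot> x) = Zer C (Dom C f) P \<cdot> x"
        using assoc_eq[OF Wi Wa(1) ia(1)] ia Wa by simp
      have "(W \<cdot> D) \<cdot> \<iota> = W \<cdot> (s \<cdot> (g \<cdot> \<iota>)) \<oplus> ng (W \<cdot> \<iota>)" unfolding D_def using Wa s g ia Po by simp
      also have "\<dots> = (W \<cdot> s) \<cdot> f" using gi Wi Wa s g ia Po f by simp
      finally show ?thesis .
    qed
    ultimately have "FT ((W \<cdot> s) \<cdot> f)" by simp
    hence "FT (W \<cdot> s)" using sepiD[OF se, of "W \<cdot> s"] Wa s by simp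
    hence ft2: "FT (g \<cdot> (W \<cdot> s))" using FT_compl[of "W \<cdot> s" g] Wa s g by simp
    have "g \<cdot> (W \<cdot> s) = f \<cdot> (r \<cdot> s) \<oplus> ng (Idn C (Cod C f))"
    proof -
      have gx: "\<And>x. x \<in> Arr C \<Longrightarrow> Cod C x = Dom C f \<Longrightarrow> g \<cdot> (\<iota> \<cdot> x) = f \<cdot> x"
        using assoc_eq[OF gi g(1) ia(1)] ia g by simp
      show ?thesis unfolding W_def using gx s r ia g Po f by simp
    qed
    hence "FT (f \<cdot> (r \<cdot> s) \<oplus> ng (Idn C (Cod C f)))" using ft2 by simp
    hence "stable_iso C T f" using SI[OF smf, of "r \<cdot> s"] r s f by simp
    thus False using ni by blast
  qed
  show ?thesis using gep gk mua(2) ab(1) seg smg nr by auto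
qed


lemma Reduce: assumes nb: "\<not> stable_balanced C T"
  shows "\<exists>g \<mu>. epi C g \<and> is_kernel C g \<mu> \<and> Dom C \<mu> \<in> T \<and> stable_epi C T g \<and> stable_mono C T g
     \<and> \<not> retraction C g"
proof -
  obtain f where f: "f \<in> Arr C" "stable_mono C T f" "stable_epi C T f" "\<not> stable_iso C T f"
    using nb unfolding stable_balanced_def by blast
  obtain f' k' where f': "epi C f'" "is_kernel C f' k'" "FT k'" "stable_epi C T f'" "\<not> stable_iso C T f'"
    using Red1[OF f] by blast
  show ?thesis using Red2[OF f'] .
qed

lemma bal_retr: "stable_balanced C T \<Longrightarrow> epi C f \<Longrightarrow> stable_mono C T f \<Longrightarrow> stable_epi C T f \<Longrightarrow> retraction C f"
  using Rretr epi_arr unfolding stable_balanced_def by blast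

lemma image_factD: "is_image_fact C \<phi> e j \<Longrightarrow> \<phi> \<in> Arr C \<and> epi C e \<and> mono C j \<and> e \<in> Arr C \<and> j \<in> Arr C
   \<and> Dom C e = Dom C \<phi> \<and> Cod C j = Cod C \<phi> \<and> Cod C e = Dom C j \<and> j \<cdot> e = \<phi>"
  unfolding is_image_fact_def using epi_arr mono_arr by blast

lemma bal_c2: assumes bal: "stable_balanced C T" shows "cond2 C T"
  unfolding cond2_def
proof (intro allI impI)
  fix \<mu> assume mm: "mono C \<mu>" and ns: "\<not> split_mono C \<mu>" and ft: "FT \<mu>"
  show "\<exists>T'\<in>T. \<exists>h\<in>hom C (Cod C \<mu>) T'. no_coinciding C \<mu> h"
  proof (rule ccontr)
    assume H: "\<not> (\<exists>T'\<in>T. \<exists>h\<in>hom C (Cod C \<mu>) T'. no_coinciding C \<mu> h)"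
    have ma: "\<mu> \<in> Arr C" using mono_arr mm by blast
    obtain c where c: "is_cokernel C \<mu> c" using coker_ex[OF ma] by blast
    have ck: "is_kernel C c \<mu>" using mono_ker[OF mm c] .
    have cep: "epi C c" using coker_epi[OF c] .
    have cc: "c \<in> Arr C" "Dom C c = Cod C \<mu>" using cokerD[OF c] by auto
    have sm: "stable_mono C T c" using Smono[OF cep ck ft] .
    have se: "stable_epi C T c"
    proof (rule Sepi[OF cep ck])
      fix T0 a assume a: "T0 \<in> T" "a \<in> Arr C" "Dom C a = Dom C c" "Cod C a = T0"
      have "a \<in> hom C (Cod C \<mu>) T0" using a cc by (auto simp: hom_def)
      hence "\<not> no_coinciding C \<mu> a" using H a(1) by blast
      then obtain e j ht where ej: "is_image_fact C (a \<cdot> \<mu>) e j" "ht \<in> hom C (Cod C \<mu>) (Dom C j)"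
          "j \<cdot> (ht \<cdot> \<mu>) = a \<cdot> \<mu>"
        unfolding no_coinciding_def by blast
      note ii = image_factD[OF ej(1)]
      have ht: "ht \<in> Arr C" "Dom C ht = Cod C \<mu>" "Cod C ht = Dom C j" using ej(2) by (auto simp: hom_def)
      have "ht \<cdot> \<mu> = e" using monoD[of j "ht \<cdot> \<mu>" e] ii ej(3) ht ma a cc by simp
      thus "\<exists>e j u. epi C e \<and> j \<in> Arr C \<and> u \<in> Arr C \<and> Dom C e = Dom C \<mu> \<and> Cod C e = Dom C j \<and> Cod C j = T0
        \<and> j \<cdot> e = a \<cdot> \<mu> \<and> Dom C u = Dom C c \<and> Cod C u = Dom C j \<and> u \<cdot> \<mu> = e"
        using ii ht ma a cc by (intro exI[of _ e] exI[of _ j] exI[of _ ht]) simp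
    qed
    have "retraction C c" using bal_retr[OF bal cep sm se] .
    hence "split_mono C \<mu>" using retr_split[OF ck] by blast
    thus False using ns by blast
  qed
qed

lemma c2_c3: "cond2 C T \<Longrightarrow> cond3 C T"
  unfolding cond2_def cond3_def using FT_dom mono_arr by blast

lemma bal_c4: assumes bal: "stable_balanced C T" shows "cond4 C T"
  unfolding cond4_def
proof (intro allI impI)
  fix f k assume ef: "epi C f" and k: "is_kernel C f k" and ft: "FT k"
   and ii: "\<forall>T0\<in>T. \<forall>h\<in>hom C (Dom C f) T0. \<forall>e j. is_image_fact C (h \<cdot> k) e j \<longrightarrow>
         (\<exists>u\<in>hom C (Dom C f) (Cod C e). u \<cdot> k = e)"
  have kk: "k \<in> Arr C" "Cod C k = Dom C f" using kerD[OF k] by auto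
  have se: "stable_epi C T f"
  proof (rule Sepi[OF ef k])
    fix T0 a assume a: "T0 \<in> T" "a \<in> Arr C" "Dom C a = Dom C f" "Cod C a = T0"
    obtain e j where ej: "is_image_fact C (a \<cdot> k) e j" using image_ex[of "a \<cdot> k"] a kk by auto
    note jj = image_factD[OF ej]
    have "a \<in> hom C (Dom C f) T0" using a by (auto simp: hom_def)
    then obtain u where u: "u \<in> hom C (Dom C f) (Cod C e)" "u \<cdot> k = e" using ii a(1) ej by blast
    show "\<exists>e j u. epi C e \<and> j \<in> Arr C \<and> u \<in> Arr C \<and> Dom C e = Dom C k \<and> Cod C e = Dom C j \<and> Cod C j = T0
        \<and> j \<cdot> e = a \<cdot> k \<and> Dom C u = Dom C f \<and> Cod C u = Dom C j \<and> u \<cdot> k = e"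
      using jj u a kk by (intro exI[of _ e] exI[of _ j] exI[of _ u]) (simp add: hom_def)
  qed
  show "retraction C f" using bal_retr[OF bal ef Smono[OF ef k ft] se] .
qed

lemma c3_bal: assumes c3: "cond3 C T" shows "stable_balanced C T"
proof (rule ccontr)
  assume "\<not> stable_balanced C T"
  then obtain g \<mu> where R: "epi C g" "is_kernel C g \<mu>" "Dom C \<mu> \<in> T" "stable_epi C T g" "stable_mono C T g"
     "\<not> retraction C g" using Reduce by blast
  have mm: "mono C \<mu>" using ker_mono[OF R(2)] .
  have ns: "\<not> split_mono C \<mu>" using split_retr[OF R(1) R(2)] R(6) by blast
  obtain T' h where h: "T' \<in> T" "h \<in> hom C (Cod C \<mu>) T'" "no_coinciding C \<mu> h"
    using c3 mm ns R(3) unfolding cond3_def by blast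
  have kk: "\<mu> \<in> Arr C" "Cod C \<mu> = Dom C g" using kerD[OF R(2)] by auto
  have ha: "h \<in> Arr C" "Dom C h = Dom C g" "Cod C h = T'" using h(2) kk by (auto simp: hom_def)
  obtain e j where ej: "is_image_fact C (h \<cdot> \<mu>) e j" using image_ex[of "h \<cdot> \<mu>"] ha kk by auto
  note jj = image_factD[OF ej]
  obtain g' u where gu: "g' \<in> Arr C" "Dom C g' = Cod C g" "Cod C g' = T'" "u \<in> Arr C" "Dom C u = Dom C g"
     "Cod C u = Dom C j" "h \<oplus> ng (g' \<cdot> g) = j \<cdot> u" "u \<cdot> \<mu> = e"
    using Klem[OF R(1) R(2) R(4) h(1) ha, of e j] jj ha kk by auto
  have "u \<in> hom C (Cod C \<mu>) (Dom C j)" using gu kk by (auto simp: hom_def)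
  moreover have "j \<cdot> (u \<cdot> \<mu>) = h \<cdot> \<mu>" using gu(8) jj by simp
  ultimately show False using h(3) ej unfolding no_coinciding_def by blast
qed

lemma c4_bal: assumes c4: "cond4 C T" shows "stable_balanced C T"
proof (rule ccontr)
  assume "\<not> stable_balanced C T"
  then obtain g \<mu> where R: "epi C g" "is_kernel C g \<mu>" "Dom C \<mu> \<in> T" "stable_epi C T g" "stable_mono C T g"
     "\<not> retraction C g" using Reduce by blast
  have kk: "\<mu> \<in> Arr C" "Cod C \<mu> = Dom C g" using kerD[OF R(2)] by auto
  have ft: "FT \<mu>" using FT_dom[OF kk(1) R(3)] .
  have "\<forall>T0\<in>T. \<forall>h\<in>hom C (Dom C g) T0. \<forall>e j. is_image_fact C (h \<cdot> \<mu>) e j \<longrightarrow>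
         (\<exists>u\<in>hom C (Dom C g) (Cod C e). u \<cdot> \<mu> = e)"
  proof (intro ballI allI impI)
    fix T0 h e j assume T0: "T0 \<in> T" and h: "h \<in> hom C (Dom C g) T0" and ej: "is_image_fact C (h \<cdot> \<mu>) e j"
    note jj = image_factD[OF ej]
    have ha: "h \<in> Arr C" "Dom C h = Dom C g" "Cod C h = T0" using h by (auto simp: hom_def)
    obtain g' u where gu: "g' \<in> Arr C" "Dom C g' = Cod C g" "Cod C g' = T0" "u \<in> Arr C" "Dom C u = Dom C g"
       "Cod C u = Dom C j" "h \<oplus> ng (g' \<cdot> g) = j \<cdot> u" "u \<cdot> \<mu> = e"
      using Klem[OF R(1) R(2) R(4) T0 ha, of e j] jj ha kk by auto
    show "\<exists>u\<in>hom C (Dom C g) (Cod C e). u \<cdot> \<mu> = e" using gu jj by (auto simp: hom_def)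
  qed
  hence "retraction C g" using c4 R(1,2) ft unfolding cond4_def by blast
  thus False using R(6) by blast
qed


lemma bal_c5: assumes bal: "stable_balanced C T" shows "cond5 C T"
  unfolding cond5_def
proof (intro allI impI)
  fix f k assume ef: "epi C f" and nr: "\<not> retraction C f" and k: "is_kernel C f k" and kT: "Dom C k \<in> T"
  show "\<exists>T'\<in>T. \<exists>h\<in>hom C (Dom C f) T'. \<forall>g\<in>hom C (Cod C f) T'.
        \<forall>k'. is_kernel C (h \<oplus> ng (g \<cdot> f)) k' \<longrightarrow> proper_sum C k k'"
  proof (rule ccontr)
    assume H: "\<not> (\<exists>T'\<in>T. \<exists>h\<in>hom C (Dom C f) T'. \<forall>g\<in>hom C (Cod C f) T'.
        \<forall>k'. is_kernel C (h \<oplus> ng (g \<cdot> f)) k' \<longrightarrow> proper_sum C k k')"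
    have f: "f \<in> Arr C" using ef epi_arr by blast
    have kk: "k \<in> Arr C" "Cod C k = Dom C f" "f \<cdot> k = Zer C (Dom C k) (Cod C f)" using kerD[OF k] by auto
    have sm: "stable_mono C T f" using Smono[OF ef k FT_dom[OF kk(1) kT]] .
    have se: "stable_epi C T f"
    proof (rule sepiI[OF f])
      fix g0 assume g0: "g0 \<in> Arr C" "Dom C g0 = Cod C f" "FT (g0 \<cdot> f)"
      obtain T0 a b where ab: "T0 \<in> T" "a \<in> Arr C" "b \<in> Arr C" "Cod C a = T0" "Dom C b = T0" "g0 \<cdot> f = b \<cdot> a"
        using FT_E[OF g0(3)] by blast
      have cb: "Cod C b = Cod C g0" "Dom C a = Dom C f"
        using g0 f ab(4,5) dc_eq[OF ab(6) ab(2) ab(3) trans[OF ab(4) ab(5)[symmetric]]] by simp_all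
      have T0o: "T0 \<in> Obj C" using T_obj[OF ab(1)] .
      have "a \<in> hom C (Dom C f) T0" using ab cb by (auto simp: hom_def)
      then obtain g k' where gk: "g \<in> hom C (Cod C f) T0" "is_kernel C (a \<oplus> ng (g \<cdot> f)) k'" "\<not> proper_sum C k k'"
        using H ab(1) by blast
      then obtain P i1 i2 p1 p2 e j where B: "is_biproduct C (Dom C k) (Dom C k') P i1 i2 p1 p2"
        and ej: "is_image_fact C (k \<cdot> p1 \<oplus> k' \<cdot> p2) e j" and ij: "iso C j"
        unfolding proper_sum_def by blast
      have ga: "g \<in> Arr C" "Dom C g = Cod C f" "Cod C g = T0" using gk(1) by (auto simp: hom_def)
      define h' where "h' = a \<oplus> ng (g \<cdot> f)"
      have h'a: "h' \<in> Arr C" "Dom C h' = Dom C f" "Cod C h' = T0" unfolding h'_def using ab(2-5) cb ga f by simp_all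
      have k'k: "k' \<in> Arr C" "Cod C k' = Dom C f" "h' \<cdot> k' = Zer C (Dom C k') T0"
        using kerD[OF gk(2)] h'a unfolding h'_def[symmetric] by auto
      have h'k: "h' \<cdot> k = a \<cdot> k" unfolding h'_def using ab(2-5) cb ga f kk T0o assoc_eq[OF kk(3)] by simp
      have "b \<cdot> (a \<cdot> k) = (b \<cdot> a) \<cdot> k" by (rule assoc[symmetric]) (use ab(2-5) cb kk in auto)
      also have "\<dots> = (g0 \<cdot> f) \<cdot> k" using ab(6) by simp
      also have "\<dots> = g0 \<cdot> (f \<cdot> k)" by (rule assoc) (use g0 f kk in auto)
      also have "\<dots> = Zer C (Dom C k) (Cod C g0)" using kk g0 f by simp
      finally have bak: "b \<cdot> (a \<cdot> k) = Zer C (Dom C k) (Cod C g0)" .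
      note bb = bipD[OF B]
      define \<sigma> where "\<sigma> = k \<cdot> p1 \<oplus> k' \<cdot> p2"
      have sa: "\<sigma> \<in> Arr C" "Dom C \<sigma> = P" "Cod C \<sigma> = Dom C f" unfolding \<sigma>_def using bb kk k'k by simp_all
      note jj = image_factD[OF ej[folded \<sigma>_def]]
      have "epi C (j \<cdot> e)" by (rule epi_comp[OF iso_epi[OF ij]]) (use jj in simp_all)
      hence sep: "epi C \<sigma>" using jj by simp
      have F1: "\<And>x. x \<in> Arr C \<Longrightarrow> Cod C x = Dom C k' \<Longrightarrow> h' \<cdot> (k' \<cdot> x) = Zer C (Dom C x) T0"
        using assoc_eq[OF k'k(3) h'a(1) k'k(1)] h'a k'k T0o by simp
      have F2: "\<And>x. x \<in> Arr C \<Longrightarrow> Cod C x = Dom C k \<Longrightarrow> h' \<cdot> (k \<cdot> x) = a \<cdot> (k \<cdot> x)"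
        using assoc_eq[OF h'k h'a(1) kk(1)] h'a kk ab(2-5) cb by simp
      have F3: "\<And>x. x \<in> Arr C \<Longrightarrow> Cod C x = Dom C k \<Longrightarrow> b \<cdot> (a \<cdot> (k \<cdot> x)) = Zer C (Dom C x) (Cod C g0)"
      proof -
        fix x assume x: "x \<in> Arr C" "Cod C x = Dom C k"
        have "b \<cdot> ((a \<cdot> k) \<cdot> x) = Zer C (Dom C k) (Cod C g0) \<cdot> x"
          using assoc_eq[OF bak ab(3), of x] x ab(2-5) cb kk by simp
        thus "b \<cdot> (a \<cdot> (k \<cdot> x)) = Zer C (Dom C x) (Cod C g0)" using x ab(2-5) cb kk g0 by simp
      qed
      have "(b \<cdot> h') \<cdot> \<sigma> = Zer C P (Cod C g0)"
        unfolding \<sigma>_def using F1 F2 F3 bb kk k'k h'a ab(2-5) cb g0 by simp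
      hence "b \<cdot> h' = Zer C (Dom C f) (Cod C g0)" using epi_zero[OF sep, of "b \<cdot> h'"] sa h'a ab(2-5) cb by simp
      hence "b \<cdot> a \<oplus> ng (b \<cdot> (g \<cdot> f)) = Zer C (Dom C f) (Cod C g0)" unfolding h'_def using ab(2-5) cb ga f by simp
      hence "b \<cdot> a = b \<cdot> (g \<cdot> f)" using sub_zero_iff[of "b \<cdot> a" "b \<cdot> (g \<cdot> f)"] ab(2-5) cb ga f by simp
      hence "g0 \<cdot> f = (b \<cdot> g) \<cdot> f" using ab(6) ab(2-5) cb ga f by simp
      hence "g0 = b \<cdot> g" using epiD[OF ef, of g0 "b \<cdot> g"] g0 ab(2-5) cb ga by simp
      thus "FT g0" using FT_I[OF ab(1) ga(1) ab(3) ga(3) ab(5)] by simp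
    qed
    have "retraction C f" using bal_retr[OF bal ef sm se] .
    thus False using nr by blast
  qed
qed

lemma c5_bal: assumes c5: "cond5 C T" shows "stable_balanced C T"
proof (rule ccontr)
  assume "\<not> stable_balanced C T"
  then obtain g \<mu> where R: "epi C g" "is_kernel C g \<mu>" "Dom C \<mu> \<in> T" "stable_epi C T g" "stable_mono C T g"
     "\<not> retraction C g" using Reduce by blast
  obtain T' h where h: "T' \<in> T" "h \<in> hom C (Dom C g) T'"
    and H: "\<forall>g'\<in>hom C (Cod C g) T'. \<forall>k'. is_kernel C (h \<oplus> ng (g' \<cdot> g)) k' \<longrightarrow> proper_sum C \<mu> k'"
    using c5 R(1,2,3,6) unfolding cond5_def by blast
  have g: "g \<in> Arr C" using R(1) epi_arr by blast
  have kk: "\<mu> \<in> Arr C" "Cod C \<mu> = Dom C g" "g \<cdot> \<mu> = Zer C (Dom C \<mu>) (Cod C g)" using kerD[OF R(2)] by auto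
  have ha: "h \<in> Arr C" "Dom C h = Dom C g" "Cod C h = T'" using h(2) by (auto simp: hom_def)
  have T'o: "T' \<in> Obj C" using T_obj[OF h(1)] .
  obtain e j where ej: "is_image_fact C (h \<cdot> \<mu>) e j" using image_ex[of "h \<cdot> \<mu>"] ha kk by auto
  note jj = image_factD[OF ej]
  obtain g' u where gu: "g' \<in> Arr C" "Dom C g' = Cod C g" "Cod C g' = T'" "u \<in> Arr C" "Dom C u = Dom C g"
     "Cod C u = Dom C j" "h \<oplus> ng (g' \<cdot> g) = j \<cdot> u" "u \<cdot> \<mu> = e"
    using Klem[OF R(1) R(2) R(4) h(1) ha, of e j] jj ha kk by auto
  define h' where "h' = h \<oplus> ng (g' \<cdot> g)"
  have h'a: "h' \<in> Arr C" "Dom C h' = Dom C g" "Cod C h' = T'" unfolding h'_def using ha gu(1-3) g by simp_all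
  have h'ju: "h' = j \<cdot> u" unfolding h'_def using gu(7) .
  obtain k' where k': "is_kernel C h' k'" using ker_ex[OF h'a(1)] by blast
  have k'k: "k' \<in> Arr C" "Cod C k' = Dom C g" "h' \<cdot> k' = Zer C (Dom C k') T'" using kerD[OF k'] h'a by auto
  have ps: "proper_sum C \<mu> k'" using H gu(1-3) k' unfolding h'_def by (auto simp: hom_def)
  obtain P i1 i2 p1 p2 where B: "is_biproduct C (Dom C \<mu>) (Dom C k') P i1 i2 p1 p2"
    using bip_ex[of "Dom C \<mu>" "Dom C k'"] kk k'k by auto
  note bb = bipD[OF B]
  define \<sigma> where "\<sigma> = \<mu> \<cdot> p1 \<oplus> k' \<cdot> p2"
  have sa: "\<sigma> \<in> Arr C" "Dom C \<sigma> = P" "Cod C \<sigma> = Dom C g" unfolding \<sigma>_def using bb kk k'k by simp_all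
  have si1: "\<sigma> \<cdot> i1 = \<mu>" unfolding \<sigma>_def using bb kk k'k by simp
  have si2: "\<sigma> \<cdot> i2 = k'" unfolding \<sigma>_def using bb kk k'k by simp
  have uep: "epi C u" using epi_cancel[of u \<mu>] gu jj kk by simp
  have uk: "is_kernel C u k'"
  proof (rule is_kernelI)
    show "u \<in> Arr C" "k' \<in> Arr C" "mono C k'" "Cod C k' = Dom C u" using gu k'k ker_mono[OF k'] by simp_all
    have "j \<cdot> (u \<cdot> k') = h' \<cdot> k'" unfolding h'ju using gu(4-6) jj k'k by simp
    also have "\<dots> = j \<cdot> Zer C (Dom C k') (Dom C j)" using k'k jj T'o ha kk by simp
    finally show "u \<cdot> k' = Zer C (Dom C k') (Cod C u)"
      using monoD[of j "u \<cdot> k'" "Zer C (Dom C k') (Dom C j)"] jj gu(4-6) k'k by simp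
  next
    fix \<phi> assume ph: "\<phi> \<in> Arr C" "Cod C \<phi> = Dom C u" "u \<cdot> \<phi> = Zer C (Dom C \<phi>) (Cod C u)"
    have "h' \<cdot> \<phi> = j \<cdot> (u \<cdot> \<phi>)" unfolding h'ju using gu(4-6) jj ph(1,2) by simp
    also have "\<dots> = Zer C (Dom C \<phi>) (Cod C h')" using ph gu(4-6) jj h'a ha kk by simp
    finally show "\<exists>v. v \<in> Arr C \<and> Dom C v = Dom C \<phi> \<and> Cod C v = Dom C k' \<and> k' \<cdot> v = \<phi>"
      using ker_fac[OF k', of \<phi>] ph gu h'a by auto
  qed
  have uck: "is_cokernel C k' u" using epi_coker[OF uep uk] .
  have sep: "epi C \<sigma>"
  proof (rule epiI0[OF sa(1)])
    fix \<psi> assume ps1: "\<psi> \<in> Arr C" "Dom C \<psi> = Cod C \<sigma>" "\<psi> \<cdot> \<sigma> = Zer C (Dom C \<sigma>) (Cod C \<psi>)"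
    have "\<psi> \<cdot> \<mu> = (\<psi> \<cdot> \<sigma>) \<cdot> i1" unfolding si1[symmetric] using ps1(1,2) sa bb by simp
    hence pm: "\<psi> \<cdot> \<mu> = Zer C (Dom C \<mu>) (Cod C \<psi>)" using ps1 sa bb by simp
    have "\<psi> \<cdot> k' = (\<psi> \<cdot> \<sigma>) \<cdot> i2" unfolding si2[symmetric] using ps1(1,2) sa bb by simp
    hence "\<psi> \<cdot> k' = Zer C (Dom C k') (Cod C \<psi>)" using ps1 sa bb by simp
    then obtain \<rho> where rho: "\<rho> \<in> Arr C" "Dom C \<rho> = Cod C u" "Cod C \<rho> = Cod C \<psi>" "\<rho> \<cdot> u = \<psi>"
      using coker_fac[OF uck, of \<psi>] ps1 sa gu k'k by auto
    have "\<rho> \<cdot> e = \<rho> \<cdot> (u \<cdot> \<mu>)" using gu(8) by simp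
    also have "\<dots> = \<psi> \<cdot> \<mu>" using assoc[of \<mu> u \<rho>] rho gu(4-6) kk by simp
    finally have "\<rho> = Zer C (Cod C e) (Cod C \<rho>)" using epi_zero[OF conjunct1[OF conjunct2[OF jj]] rho(1)] pm rho gu jj kk ha by simp
    thus "\<psi> = Zer C (Cod C \<sigma>) (Cod C \<psi>)" using rho gu jj sa ps1 by simp
  qed
  have "is_image_fact C \<sigma> \<sigma> (Idn C (Cod C \<sigma>))"
    unfolding is_image_fact_def using sa sep mono_idn g by simp
  moreover have "iso C (Idn C (Cod C \<sigma>))" using iso_idn sa g by simp
  ultimately show False using ps B unfolding proper_sum_def \<sigma>_def by blast
qed


end

theorem theorem4p6:
  fixes C :: "('o, 'm) cat" and T :: "'o set"
  assumes "abelian C" and "proj_subcat C T"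
  shows "(stable_balanced C T \<longleftrightarrow> cond2 C T)
       \<and> (stable_balanced C T \<longleftrightarrow> cond3 C T)
       \<and> (stable_balanced C T \<longleftrightarrow> cond4 C T)
       \<and> (stable_balanced C T \<longleftrightarrow> cond5 C T)"
proof -
  interpret AB C T using assms by unfold_locales
  have 2: "stable_balanced C T \<longleftrightarrow> cond2 C T" using bal_c2 c2_c3 c3_bal by blast
  have 3: "stable_balanced C T \<longleftrightarrow> cond3 C T" using bal_c2 c2_c3 c3_bal by blast
  have 4: "stable_balanced C T \<longleftrightarrow> cond4 C T" using bal_c4 c4_bal by blast
  have 5: "stable_balanced C T \<longleftrightarrow> cond5 C T" using bal_c5 c5_bal by blast
  show ?thesis using 2 3 4 5 by blast
qed

end
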